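(* Let $\Lambda$ be a row-finite $k$-graph with no sources. Suppose that the infinite path space $\Lambda^\infty$ admits a $\Lambda$-projective system on $(\Lambda^\infty,\mu)$, for some Radon measure $\mu$ such that all cylinder sets have finite measure, with the standard prefixing maps $\{\sigma_\lambda\}$, standard coding maps $\{\sigma^n\}_{n\in\mathbb{N}^k}$, and functions $\{f_\lambda\}$, and let $\{T_\lambda\}$ be the associated operators $T_\lambda f=f_\lambda\cdot(f\circ\sigma^{d(\lambda)})$. Let $E \subseteq \Lambda^\infty$ be a measurable set with $\mu(E\,\Delta\,(\sigma^n)^{-1}(E))=0$ for all $n\in\mathbb{N}^k$ and $\mu(E\cap Z(v))>0$ for all $v\in\Lambda^0$, so that the restriction $\{T_\lambda^E\}_{\lambda \in \Lambda}$ of the $\Lambda$-projective representation to $L^2(E, \mu)$ (i.e. the one associated to the restricted system on $(\Lambda^\infty,\mu_E)$) is again a $\Lambda$-projective representation. Then (a) the commutant of $\{T_\lambda^E: \lambda \in \Lambda\}$ consists of multiplication operators by functions $h$ with $h \circ \sigma^n = h$ $\mu_E$-a.e. for all $n\in \mathbb{N}^k$; (b) if $\sigma^n$ is ergodic with respect to $\mu_E$ for some $n \in \mathbb{N}^k$, then $\{T_\lambda^E\}_{\lambda \in \Lambda}$ is irreducible; (c) if $\{\sigma^n\}_{n\in\mathbb{N}^k}$ is jointly ergodic with respect to $\mu_E$, then $\{T_\lambda^E\}_{\lambda \in \Lambda}$ is irreducible.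
   Context: A $k$-graph is a countable small category $\Lambda$ with a functor $d:\Lambda\to\mathbb{N}^k$ with unique factorization; $\Lambda^0$ vertices, $r,s$ range/source, $v\Lambda^n$ paths of degree $n$ with range $v$; row-finite: finite; no sources: nonempty. $C^*(\Lambda)$ is the universal $C^*$-algebra of partial isometries $s_\lambda$ satisfying the Cuntz–Krieger relations ($\{s_v\}$ orthogonal projections, $s_\lambda s_\eta=s_{\lambda\eta}$, $s_\lambda^*s_\lambda=s_{s(\lambda)}$, $s_v=\sum_{\lambda\in v\Lambda^n}s_\lambda s_\lambda^*$). $\Lambda^\infty$: degree-preserving functors $x:\Omega_k\to\Lambda$ ($\Omega_k$ has morphisms $(m,n)$ with $m\le n$ in $\mathbb{N}^k$, $d(m,n)=n-m$), $r(x)=x(0)$; cylinder sets $Z(\lambda)=\{x: x(0,d(\lambda))=\lambda\}$ give a locally compact Hausdorff topology and Borel structure. Standard coding maps $\sigma^n(x)(p,q)=x(p+n,q+n)$; standard prefixing maps $\sigma_\lambda:Z(s(\lambda))\to Z(\lambda)$, $x\mapsto\lambda x$. A $\Lambda$-projective system on $(X,\mu)$ with prefixing maps $\tau_\lambda:D_\lambda\to R_\lambda$ and coding maps $\tau^n$ is a $\Lambda$-semibranching function system (for each $n$, $\{\tau_\lambda:d(\lambda)=n\}$ is a semibranching function system with coding map $\tau^n$, i.e. $0<\mu(D_\lambda)<\infty$, ranges $R_\lambda$ of finite measure, a.e. disjoint, covering $X$ a.e., $d(\mu\circ\tau_\lambda)/d\mu>0$ a.e., $\tau^n\circ\tau_\lambda=\mathrm{id}$;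 $\tau_v=\mathrm{id}$; $\tau_\lambda\tau_\nu=\tau_{\lambda\nu}$ a.e.; $\tau^m\tau^n=\tau^{m+n}$) together with $f_\lambda\in L^2$ with $0\ne d(\mu\circ\tau_\lambda^{-1})/d\mu=|f_\lambda|^2$ and $f_\lambda(f_\nu\circ\tau^{d(\lambda)})=f_{\lambda\nu}$. For a measurable $E$, $\mu_E(B)=\mu(B\cap E)$. A map $T$ is ergodic w.r.t. $\mu_E$ if every measurable $A$ with $\mu_E(A\,\Delta\,T^{-1}(A))=0$ has $\mu_E(A)=0$ or $\mu_E(\Lambda^\infty\setminus A)=0$; a family is jointly ergodic if the same holds for sets invariant (in this sense) under every member of the family. *)

theory Defs
  imports "HOL-Analysis.Analysis" "HOL-Probability.Probability" "HOL-Library.Function_Algebras"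
begin

text \<open>Degrees live in N^k, represented as functions nat => nat vanishing from k on.
  Order, addition, subtraction and 0 are pointwise.\<close>

definition Nk :: "nat \<Rightarrow> (nat \<Rightarrow> nat) set" where
  "Nk k = {n. \<forall>i\<ge>k. n i = 0}"

text \<open>A k-graph as a small category: vertices (objects), paths (morphisms), range, source,
  degree functor, composition (cmp a b = "a b", defined when src a = rng b) and identities.\<close>

record ('v, 'p) kgraph =
  verts :: "'v set"
  paths :: "'p set"
  rng :: "'p \<Rightarrow> 'v"
  src :: "'p \<Rightarrow> 'v"
  deg :: "'p \<Rightarrow> nat \<Rightarrow> nat"
  cmp :: "'p \<Rightarrow> 'p \<Rightarrow> 'p"
  idp :: "'v \<Rightarrow> 'p"

definition kgraph :: "nat \<Rightarrow> ('v, 'p) kgraph \<Rightarrow> bool" where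
  "kgraph k G \<longleftrightarrow>
     countable (paths G) \<and>
     (\<forall>v\<in>verts G. idp G v \<in> paths G \<and> rng G (idp G v) = v \<and> src G (idp G v) = v
                   \<and> deg G (idp G v) = 0) \<and>
     (\<forall>l\<in>paths G. rng G l \<in> verts G \<and> src G l \<in> verts G \<and> deg G l \<in> Nk k) \<and>
     (\<forall>a\<in>paths G. \<forall>b\<in>paths G. src G a = rng G b \<longrightarrow>
        cmp G a b \<in> paths G \<and> rng G (cmp G a b) = rng G a \<and> src G (cmp G a b) = src G b
        \<and> deg G (cmp G a b) = deg G a + deg G b) \<and>
     (\<forall>a\<in>paths G. \<forall>b\<in>paths G. \<forall>c\<in>paths G. src G a = rng G b \<longrightarrow> src G b = rng G c \<longrightarrow>
        cmp G (cmp G a b) c = cmp G a (cmp G b c)) \<and>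
     (\<forall>l\<in>paths G. cmp G (idp G (rng G l)) l = l \<and> cmp G l (idp G (src G l)) = l) \<and>
     (\<forall>l\<in>paths G. \<forall>m\<in>Nk k. \<forall>n\<in>Nk k. deg G l = m + n \<longrightarrow>
        (\<exists>!(a, b). a \<in> paths G \<and> b \<in> paths G \<and> src G a = rng G b \<and>
                   deg G a = m \<and> deg G b = n \<and> cmp G a b = l))"

definition row_finite_no_sources :: "nat \<Rightarrow> ('v, 'p) kgraph \<Rightarrow> bool" where
  "row_finite_no_sources k G \<longleftrightarrow>
     (\<forall>v\<in>verts G. \<forall>n\<in>Nk k.
        finite {l\<in>paths G. rng G l = v \<and> deg G l = n} \<and>
        {l\<in>paths G. rng G l = v \<and> deg G l = n} \<noteq> {})"

text \<open>An infinite path is a degree-preserving functor from Omega_k; the morphism (m,n), m \<le> n,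
  is sent to x m n.  Off the morphisms of Omega_k the function is fixed to undefined.\<close>

type_synonym 'p ipath = "(nat \<Rightarrow> nat) \<Rightarrow> (nat \<Rightarrow> nat) \<Rightarrow> 'p"

definition inf_paths :: "nat \<Rightarrow> ('v, 'p) kgraph \<Rightarrow> 'p ipath set" where
  "inf_paths k G = {x.
     (\<forall>m n. if m \<le> n \<and> m \<in> Nk k \<and> n \<in> Nk k
            then x m n \<in> paths G \<and> deg G (x m n) = n - m
            else x m n = undefined) \<and>
     (\<forall>m\<in>Nk k. x m m \<in> idp G ` verts G) \<and>
     (\<forall>m\<in>Nk k. \<forall>n\<in>Nk k. \<forall>p\<in>Nk k. m \<le> n \<longrightarrow> n \<le> p \<longrightarrow>
        src G (x m n) = rng G (x n p) \<and> cmp G (x m n) (x n p) = x m p)}"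

definition cyl :: "nat \<Rightarrow> ('v, 'p) kgraph \<Rightarrow> 'p \<Rightarrow> 'p ipath set" where
  "cyl k G l = {x \<in> inf_paths k G. x 0 (deg G l) = l}"

definition shift :: "nat \<Rightarrow> (nat \<Rightarrow> nat) \<Rightarrow> 'p ipath \<Rightarrow> 'p ipath" where
  "shift k n x = (\<lambda>p q. if p \<le> q \<and> p \<in> Nk k \<and> q \<in> Nk k then x (p + n) (q + n) else undefined)"

text \<open>Standard prefixing map sigma_l : Z(s(l)) \<rightarrow> Z(l), x \<mapsto> l x (the unique infinite path
  whose initial segment of degree d(l) is l and whose d(l)-shift is x).\<close>
definition prefix :: "nat \<Rightarrow> ('v, 'p) kgraph \<Rightarrow> 'p \<Rightarrow> 'p ipath \<Rightarrow> 'p ipath" where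
  "prefix k G l x = (THE y. y \<in> inf_paths k G \<and> y 0 (deg G l) = l \<and> shift k (deg G l) y = x)"

definition symdiff :: "'a set \<Rightarrow> 'a set \<Rightarrow> 'a set" where
  "symdiff A B = (A - B) \<union> (B - A)"

definition SBFS_deg ::
  "nat \<Rightarrow> ('v, 'p) kgraph \<Rightarrow> 'x measure \<Rightarrow> ('p \<Rightarrow> 'x set) \<Rightarrow> ('p \<Rightarrow> 'x set)
   \<Rightarrow> ('p \<Rightarrow> 'x \<Rightarrow> 'x) \<Rightarrow> ((nat \<Rightarrow> nat) \<Rightarrow> 'x \<Rightarrow> 'x) \<Rightarrow> (nat \<Rightarrow> nat) \<Rightarrow> bool" where
  "SBFS_deg k G M D R tau cod n \<longleftrightarrow>
     cod n \<in> measurable M M \<and>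
     (\<forall>l\<in>paths G. deg G l = n \<longrightarrow>
        D l \<in> sets M \<and> R l \<in> sets M \<and>
        0 < emeasure M (D l) \<and> emeasure M (D l) < \<infinity> \<and> emeasure M (R l) < \<infinity> \<and>
        tau l \<in> measurable (restrict_space M (D l)) M \<and> tau l ` D l = R l \<and>
        (\<exists>g \<in> borel_measurable M. (AE x in M. x \<in> D l \<longrightarrow> g x > 0) \<and>
           (\<forall>B\<in>sets M. B \<subseteq> D l \<longrightarrow>
               tau l ` B \<in> sets M \<and> emeasure M (tau l ` B) = (\<integral>\<^sup>+ x\<in>B. g x \<partial>M))) \<and>
        (\<forall>x\<in>D l. cod n (tau l x) = x)) \<and>
     (\<forall>l\<in>paths G. \<forall>l'\<in>paths G. deg G l = n \<longrightarrow> deg G l' = n \<longrightarrow> l \<noteq> l' \<longrightarrow>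
        emeasure M (R l \<inter> R l') = 0) \<and>
     emeasure M (space M - (\<Union>l\<in>{l\<in>paths G. deg G l = n}. R l)) = 0"

definition Lambda_SBFS ::
  "nat \<Rightarrow> ('v, 'p) kgraph \<Rightarrow> 'x measure \<Rightarrow> ('p \<Rightarrow> 'x set) \<Rightarrow> ('p \<Rightarrow> 'x set)
   \<Rightarrow> ('p \<Rightarrow> 'x \<Rightarrow> 'x) \<Rightarrow> ((nat \<Rightarrow> nat) \<Rightarrow> 'x \<Rightarrow> 'x) \<Rightarrow> bool" where
  "Lambda_SBFS k G M D R tau cod \<longleftrightarrow>
     (\<forall>n\<in>Nk k. SBFS_deg k G M D R tau cod n) \<and>
     (\<forall>v\<in>verts G. \<forall>x\<in>D (idp G v). tau (idp G v) x = x) \<and>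
     (\<forall>a\<in>paths G. \<forall>b\<in>paths G. src G a = rng G b \<longrightarrow>
        (AE x in M. x \<in> D (cmp G a b) \<longrightarrow> tau a (tau b x) = tau (cmp G a b) x)) \<and>
     (\<forall>m\<in>Nk k. \<forall>n\<in>Nk k. \<forall>x\<in>space M. cod m (cod n x) = cod (m + n) x)"

text \<open>Square-integrable complex functions (representatives of L^2 classes).\<close>
definition L2 :: "'x measure \<Rightarrow> ('x \<Rightarrow> complex) set" where
  "L2 M = {g. g \<in> borel_measurable M \<and> integrable M (\<lambda>x. (cmod (g x))\<^sup>2)}"

definition Lambda_projective_system ::
  "nat \<Rightarrow> ('v, 'p) kgraph \<Rightarrow> 'x measure \<Rightarrow> ('p \<Rightarrow> 'x set) \<Rightarrow> ('p \<Rightarrow> 'x set)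
   \<Rightarrow> ('p \<Rightarrow> 'x \<Rightarrow> 'x) \<Rightarrow> ((nat \<Rightarrow> nat) \<Rightarrow> 'x \<Rightarrow> 'x) \<Rightarrow> ('p \<Rightarrow> 'x \<Rightarrow> complex) \<Rightarrow> bool" where
  "Lambda_projective_system k G M D R tau cod f \<longleftrightarrow>
     Lambda_SBFS k G M D R tau cod \<and>
     (\<forall>l\<in>paths G. f l \<in> L2 M \<and> \<not> (AE x in M. f l x = 0) \<and>
        (\<forall>B\<in>sets M. emeasure M (tau l -` B \<inter> D l) =
                     (\<integral>\<^sup>+ x\<in>B. ennreal ((cmod (f l x))\<^sup>2) \<partial>M))) \<and>
     (\<forall>a\<in>paths G. \<forall>b\<in>paths G. src G a = rng G b \<longrightarrow>
        (AE x in M. f a x * f b (cod (deg G a) x) = f (cmp G a b) x))"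

section \<open>Operators on L^2 (acting on representatives, modulo a.e. equality)\<close>

definition l2_inner :: "'x measure \<Rightarrow> ('x \<Rightarrow> complex) \<Rightarrow> ('x \<Rightarrow> complex) \<Rightarrow> complex" where
  "l2_inner M g h = (LINT x|M. g x * cnj (h x))"

definition l2_norm :: "'x measure \<Rightarrow> ('x \<Rightarrow> complex) \<Rightarrow> real" where
  "l2_norm M g = sqrt (LINT x|M. (cmod (g x))\<^sup>2)"

definition bounded_op :: "'x measure \<Rightarrow> (('x \<Rightarrow> complex) \<Rightarrow> ('x \<Rightarrow> complex)) \<Rightarrow> bool" where
  "bounded_op M A \<longleftrightarrow>
     (\<forall>g\<in>L2 M. A g \<in> L2 M) \<and>
     (\<forall>g\<in>L2 M. \<forall>h\<in>L2 M. (AE x in M. g x = h x) \<longrightarrow> (AE x in M. A g x = A h x)) \<and>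
     (\<forall>g\<in>L2 M. \<forall>h\<in>L2 M. AE x in M. A (\<lambda>y. g y + h y) x = A g x + A h x) \<and>
     (\<forall>g\<in>L2 M. \<forall>c. AE x in M. A (\<lambda>y. c * g y) x = c * A g x) \<and>
     (\<exists>C. \<forall>g\<in>L2 M. l2_norm M (A g) \<le> C * l2_norm M g)"

definition is_adjoint :: "'x measure \<Rightarrow> (('x \<Rightarrow> complex) \<Rightarrow> ('x \<Rightarrow> complex))
    \<Rightarrow> (('x \<Rightarrow> complex) \<Rightarrow> ('x \<Rightarrow> complex)) \<Rightarrow> bool" where
  "is_adjoint M T B \<longleftrightarrow> (\<forall>g\<in>L2 M. B g \<in> L2 M) \<and>
     (\<forall>g\<in>L2 M. \<forall>h\<in>L2 M. l2_inner M (T g) h = l2_inner M g (B h))"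

definition commutes :: "'x measure \<Rightarrow> (('x \<Rightarrow> complex) \<Rightarrow> ('x \<Rightarrow> complex))
    \<Rightarrow> (('x \<Rightarrow> complex) \<Rightarrow> ('x \<Rightarrow> complex)) \<Rightarrow> bool" where
  "commutes M A B \<longleftrightarrow> (\<forall>g\<in>L2 M. AE x in M. A (B g) x = B (A g) x)"

text \<open>Commutant of the representation (i.e. of the *-algebra generated by the operators):
  bounded operators commuting with every T and every adjoint T^*.\<close>
definition commutant :: "'x measure \<Rightarrow> (('x \<Rightarrow> complex) \<Rightarrow> ('x \<Rightarrow> complex)) set
    \<Rightarrow> (('x \<Rightarrow> complex) \<Rightarrow> ('x \<Rightarrow> complex)) set" where
  "commutant M Ts = {A. bounded_op M A \<and>
     (\<forall>T\<in>Ts. commutes M A T \<and> (\<forall>B. is_adjoint M T B \<longrightarrow> commutes M A B))}"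

definition irreducible_ops :: "'x measure \<Rightarrow> (('x \<Rightarrow> complex) \<Rightarrow> ('x \<Rightarrow> complex)) set \<Rightarrow> bool" where
  "irreducible_ops M Ts \<longleftrightarrow>
     (\<forall>A\<in>commutant M Ts. \<exists>c::complex. \<forall>g\<in>L2 M. AE x in M. A g x = c * g x)"

definition proj_rep_op :: "('v, 'p) kgraph \<Rightarrow> ((nat \<Rightarrow> nat) \<Rightarrow> 'x \<Rightarrow> 'x) \<Rightarrow> ('p \<Rightarrow> 'x \<Rightarrow> complex)
    \<Rightarrow> 'p \<Rightarrow> ('x \<Rightarrow> complex) \<Rightarrow> ('x \<Rightarrow> complex)" where
  "proj_rep_op G cod f l g = (\<lambda>x. f l x * g (cod (deg G l) x))"

definition restr_measure :: "'x measure \<Rightarrow> 'x set \<Rightarrow> 'x measure" where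
  "restr_measure M E = density M (indicator E)"

definition ergodic_wrt :: "'x measure \<Rightarrow> ('x \<Rightarrow> 'x) \<Rightarrow> bool" where
  "ergodic_wrt M T \<longleftrightarrow> (\<forall>A\<in>sets M.
     emeasure M (symdiff A (T -` A \<inter> space M)) = 0 \<longrightarrow>
     emeasure M A = 0 \<or> emeasure M (space M - A) = 0)"

definition jointly_ergodic_wrt :: "'x measure \<Rightarrow> ('x \<Rightarrow> 'x) set \<Rightarrow> bool" where
  "jointly_ergodic_wrt M Fs \<longleftrightarrow> (\<forall>A\<in>sets M.
     (\<forall>T\<in>Fs. emeasure M (symdiff A (T -` A \<inter> space M)) = 0) \<longrightarrow>
     emeasure M A = 0 \<or> emeasure M (space M - A) = 0)"

end

theory Submission
  imports Defs
begin

definition nsq :: "'x measure \<Rightarrow> ('x \<Rightarrow> complex) \<Rightarrow> real" where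
  "nsq N g = (LINT x|N. (cmod (g x))\<^sup>2)"

lemma sq2: "((a::real) + b)\<^sup>2 \<le> 2 * a\<^sup>2 + 2 * b\<^sup>2"
proof -
  have "(a+b)\<^sup>2 + (a-b)\<^sup>2 = 2*a\<^sup>2+2*b\<^sup>2" by (simp add: power2_eq_square algebra_simps)
  moreover have "0 \<le> (a-b)\<^sup>2" by simp
  ultimately show ?thesis by linarith
qed

lemma sq3: "0 \<le> (a::real) \<Longrightarrow> 0 \<le> b \<Longrightarrow> a * b \<le> a\<^sup>2 + b\<^sup>2"
proof -
  assume "0 \<le> a" "0 \<le> b"
  have "(a-b)\<^sup>2 = a\<^sup>2 + b\<^sup>2 - 2*a*b" by (simp add: power2_eq_square algebra_simps)
  moreover have "0 \<le> (a-b)\<^sup>2" by simp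
  moreover have "0 \<le> a*b" using \<open>0 \<le> a\<close> \<open>0 \<le> b\<close> by simp
  ultimately show ?thesis by linarith
qed

lemma borel_measurable_cnj[measurable (raw)]:
  "f \<in> borel_measurable M \<Longrightarrow> (\<lambda>x. cnj (f x)) \<in> borel_measurable M"
  by (rule borel_measurable_continuous_on[where f=cnj]) (auto intro: continuous_intros)

lemma L2_D: "g \<in> L2 N \<Longrightarrow> g \<in> borel_measurable N"
  "g \<in> L2 N \<Longrightarrow> integrable N (\<lambda>x. (cmod (g x))\<^sup>2)"
  by (auto simp: L2_def)

lemma L2_bound:
  assumes "h \<in> L2 N" "g \<in> borel_measurable N" "AE x in N. cmod (g x) \<le> K * cmod (h x)"
  shows "g \<in> L2 N"
proof -
  have i: "integrable N (\<lambda>x. K\<^sup>2 * (cmod (h x))\<^sup>2)" using L2_D[OF assms(1)] by auto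
  have ae: "AE x in N. norm ((cmod (g x))\<^sup>2) \<le> norm (K\<^sup>2 * (cmod (h x))\<^sup>2)"
    using assms(3)
  proof eventually_elim
    fix x assume a: "cmod (g x) \<le> K * cmod (h x)"
    have "(cmod (g x))\<^sup>2 \<le> (K * cmod (h x))\<^sup>2" by (rule power_mono[OF a]) simp
    then show "norm ((cmod (g x))\<^sup>2) \<le> norm (K\<^sup>2 * (cmod (h x))\<^sup>2)"
      by (simp add: power_mult_distrib)
  qed
  have m: "(\<lambda>x. (cmod (g x))\<^sup>2) \<in> borel_measurable N" using assms(2) by measurable
  have "integrable N (\<lambda>x. (cmod (g x))\<^sup>2)"
    by (rule Bochner_Integration.integrable_bound[OF i m ae])
  then show ?thesis using assms(2) by (simp add: L2_def)
qed

lemma L2_add: assumes "g \<in> L2 N" "h \<in> L2 N" shows "(\<lambda>x. g x + h x) \<in> L2 N"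
proof -
  have "integrable N (\<lambda>x. 2 * (cmod (g x))\<^sup>2 + 2 * (cmod (h x))\<^sup>2)"
    by (intro Bochner_Integration.integrable_add integrable_mult_right L2_D assms)
  moreover have "AE x in N. norm ((cmod (g x + h x))\<^sup>2) \<le> norm (2 * (cmod (g x))\<^sup>2 + 2 * (cmod (h x))\<^sup>2)"
  proof (intro AE_I2)
    fix x
    have a: "cmod (g x + h x) \<le> cmod (g x) + cmod (h x)" by (rule norm_triangle_ineq)
    have "(cmod (g x + h x))\<^sup>2 \<le> (cmod (g x) + cmod (h x))\<^sup>2"
      using a by (simp add: power_mono)
    also have "\<dots> \<le> 2 * (cmod (g x))\<^sup>2 + 2 * (cmod (h x))\<^sup>2"
      using sq2[of "cmod (g x)" "cmod (h x)"] by simp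
    finally show "norm ((cmod (g x + h x))\<^sup>2) \<le> norm (2 * (cmod (g x))\<^sup>2 + 2 * (cmod (h x))\<^sup>2)"
      by simp
  qed
  moreover have "(\<lambda>x. g x + h x) \<in> borel_measurable N" using L2_D(1)[OF assms(1)] L2_D(1)[OF assms(2)] by measurable
  moreover have "(\<lambda>x. (cmod (g x + h x))\<^sup>2) \<in> borel_measurable N" using L2_D(1)[OF assms(1)] L2_D(1)[OF assms(2)] by measurable
  ultimately have "integrable N (\<lambda>x. (cmod (g x + h x))\<^sup>2)"
    by (intro Bochner_Integration.integrable_bound[where f="\<lambda>x. 2 * (cmod (g x))\<^sup>2 + 2 * (cmod (h x))\<^sup>2" and g="\<lambda>x. (cmod (g x + h x))\<^sup>2"]) assumption+
  then show ?thesis using \<open>(\<lambda>x. g x + h x) \<in> borel_measurable N\<close> by (simp add: L2_def)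
qed

lemma L2_mult_bdd:
  assumes "g \<in> L2 N" "\<phi> \<in> borel_measurable N" "AE x in N. cmod (\<phi> x) \<le> K"
  shows "(\<lambda>x. \<phi> x * g x) \<in> L2 N"
  apply (rule L2_bound[OF assms(1), where K=K])
  using L2_D(1)[OF assms(1)] assms(2) apply measurable
  using assms(3) apply eventually_elim
  by (simp add: norm_mult mult_right_mono)

lemma L2_scale: assumes "g \<in> L2 N" shows "(\<lambda>x. c * g x) \<in> L2 N"
  using L2_mult_bdd[OF assms, of "\<lambda>_. c" "cmod c"] by auto

lemma L2_uminus: assumes "g \<in> L2 N" shows "(\<lambda>x. - g x) \<in> L2 N"
  using L2_scale[OF assms, of "-1"] by simp

lemma L2_diff: assumes "g \<in> L2 N" "h \<in> L2 N" shows "(\<lambda>x. g x - h x) \<in> L2 N"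
  using L2_add[OF assms(1) L2_uminus[OF assms(2)]] by simp

lemma L2_zero: "(\<lambda>x. 0) \<in> L2 N" by (simp add: L2_def)

lemma inner_integrable:
  assumes "g \<in> L2 N" "h \<in> L2 N" shows "integrable N (\<lambda>x. g x * cnj (h x))"
proof -
  have "integrable N (\<lambda>x. (cmod (g x))\<^sup>2 + (cmod (h x))\<^sup>2)" by (intro Bochner_Integration.integrable_add integrable_mult_right L2_D assms)
  moreover have "AE x in N. norm (g x * cnj (h x)) \<le> norm ((cmod (g x))\<^sup>2 + (cmod (h x))\<^sup>2)"
  proof (intro AE_I2)
    fix x
    have "cmod (g x) * cmod (h x) \<le> (cmod (g x))\<^sup>2 + (cmod (h x))\<^sup>2"
      using sq3[of "cmod (g x)" "cmod (h x)"] by simp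
    then show "norm (g x * cnj (h x)) \<le> norm ((cmod (g x))\<^sup>2 + (cmod (h x))\<^sup>2)"
      by (simp add: norm_mult)
  qed
  moreover have "(\<lambda>x. g x * cnj (h x)) \<in> borel_measurable N" using L2_D(1)[OF assms(1)] L2_D(1)[OF assms(2)] by measurable
  ultimately show ?thesis
    by (intro Bochner_Integration.integrable_bound[where f="\<lambda>x. (cmod (g x))\<^sup>2 + (cmod (h x))\<^sup>2" and g="\<lambda>x. g x * cnj (h x)"]) assumption+
qed

lemma nsq_nonneg: "0 \<le> nsq N g" unfolding nsq_def by simp

lemma nsq_zero: assumes "g \<in> L2 N" "nsq N g \<le> 0" shows "AE x in N. g x = 0"
proof -
  have "nsq N g = 0" using assms(2) nsq_nonneg[of N g] by simp
  then have "AE x in N. (cmod (g x))\<^sup>2 = 0"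
    using integral_nonneg_eq_0_iff_AE[OF L2_D(2)[OF assms(1)]] by (simp add: nsq_def)
  then show ?thesis by eventually_elim simp
qed

lemma nsq_cong: assumes "AE x in N. g x = h x" "g \<in> L2 N" "h \<in> L2 N" shows "nsq N g = nsq N h"
  unfolding nsq_def using assms by (intro integral_cong_AE) (auto dest: L2_D)

lemma nsq_mono: assumes "g \<in> L2 N" "h \<in> L2 N" "AE x in N. cmod (g x) \<le> cmod (h x)"
  shows "nsq N g \<le> nsq N h"
  unfolding nsq_def using assms
  by (intro integral_mono_AE) (auto dest: L2_D elim!: eventually_mono intro: power_mono)

lemma nsq_add: assumes "g \<in> L2 N" "h \<in> L2 N"
  shows "nsq N (\<lambda>x. g x + h x) \<le> 2 * nsq N g + 2 * nsq N h"
proof -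
  have "nsq N (\<lambda>x. g x + h x) \<le> (LINT x|N. 2 * (cmod (g x))\<^sup>2 + 2 * (cmod (h x))\<^sup>2)"
    unfolding nsq_def
  proof (rule integral_mono)
    show "integrable N (\<lambda>x. (cmod (g x + h x))\<^sup>2)" using L2_add[OF assms] by (rule L2_D)
    show "integrable N (\<lambda>x. 2 * (cmod (g x))\<^sup>2 + 2 * (cmod (h x))\<^sup>2)"
      by (intro Bochner_Integration.integrable_add integrable_mult_right L2_D assms)
    fix x
    have a: "cmod (g x + h x) \<le> cmod (g x) + cmod (h x)" by (rule norm_triangle_ineq)
    have "(cmod (g x + h x))\<^sup>2 \<le> (cmod (g x) + cmod (h x))\<^sup>2"
      using a by (simp add: power_mono)
    also have "\<dots> \<le> 2 * (cmod (g x))\<^sup>2 + 2 * (cmod (h x))\<^sup>2"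
      using sq2[of "cmod (g x)" "cmod (h x)"] by simp
    finally show "(cmod (g x + h x))\<^sup>2 \<le> 2 * (cmod (g x))\<^sup>2 + 2 * (cmod (h x))\<^sup>2" .
  qed
  also have "\<dots> = 2 * nsq N g + 2 * nsq N h"
    unfolding nsq_def using L2_D assms by (subst Bochner_Integration.integral_add) auto
  finally show ?thesis .
qed

lemma inner_self: assumes "g \<in> L2 N" shows "l2_inner N g g = complex_of_real (nsq N g)"
proof -
  have "l2_inner N g g = (LINT x|N. complex_of_real ((cmod (g x))\<^sup>2))"
    unfolding l2_inner_def by (intro Bochner_Integration.integral_cong refl) (metis complex_norm_square)
  also have "\<dots> = complex_of_real (nsq N g)" unfolding nsq_def by (rule integral_complex_of_real)
  finally show ?thesis .
qed

lemma l2_norm_nsq: "l2_norm N g = sqrt (nsq N g)" by (simp add: l2_norm_def nsq_def)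


lemma L2_sum: "finite C \<Longrightarrow> (\<forall>c\<in>C. \<phi> c \<in> L2 N) \<Longrightarrow> (\<lambda>y. \<Sum>c\<in>C. \<phi> c y) \<in> L2 N"
  by (induction C rule: finite_induct) (auto simp: L2_zero intro: L2_add)

lemma bop_L2: "bounded_op N A \<Longrightarrow> g \<in> L2 N \<Longrightarrow> A g \<in> L2 N"
  by (simp add: bounded_op_def)

lemma bop_ae: "bounded_op N A \<Longrightarrow> g \<in> L2 N \<Longrightarrow> h \<in> L2 N \<Longrightarrow> AE x in N. g x = h x
  \<Longrightarrow> AE x in N. A g x = A h x"
  by (simp add: bounded_op_def)

lemma bop_add: "bounded_op N A \<Longrightarrow> g \<in> L2 N \<Longrightarrow> h \<in> L2 N
  \<Longrightarrow> AE x in N. A (\<lambda>y. g y + h y) x = A g x + A h x"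
  by (simp add: bounded_op_def)

lemma bop_scale: "bounded_op N A \<Longrightarrow> g \<in> L2 N
  \<Longrightarrow> AE x in N. A (\<lambda>y. c * g y) x = c * A g x"
  by (simp add: bounded_op_def)

lemma bop_zero: assumes "bounded_op N A" shows "AE x in N. A (\<lambda>y. 0) x = 0"
  using bop_scale[OF assms L2_zero, of 0] by simp

lemma bop_diff: assumes "bounded_op N A" "g \<in> L2 N" "h \<in> L2 N"
  shows "AE x in N. A (\<lambda>y. g y - h y) x = A g x - A h x"
proof -
  have e: "(\<lambda>y. g y - h y) = (\<lambda>y. g y + (\<lambda>y. (-1) * h y) y)" by auto
  have "AE x in N. A (\<lambda>y. g y + (\<lambda>y. (-1) * h y) y) x = A g x + A (\<lambda>y. (-1) * h y) x"
    by (rule bop_add[OF assms(1,2) L2_scale[OF assms(3)]])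
  moreover have "AE x in N. A (\<lambda>y. (-1) * h y) x = (-1) * A h x"
    by (rule bop_scale[OF assms(1,3)])
  ultimately show ?thesis unfolding e by eventually_elim simp
qed

lemma bop_norm: assumes "bounded_op N A"
  shows "\<exists>C\<ge>0. \<forall>g\<in>L2 N. nsq N (A g) \<le> C * nsq N g"
proof -
  obtain c where c: "\<forall>g\<in>L2 N. l2_norm N (A g) \<le> c * l2_norm N g"
    using assms by (auto simp: bounded_op_def)
  have "\<forall>g\<in>L2 N. nsq N (A g) \<le> c\<^sup>2 * nsq N g"
  proof
    fix g assume g: "g \<in> L2 N"
    have a: "sqrt (nsq N (A g)) \<le> c * sqrt (nsq N g)" using c g by (simp add: l2_norm_nsq)
    have p: "0 \<le> sqrt (nsq N (A g))" "0 \<le> sqrt (nsq N g)" using nsq_nonneg by auto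
    show "nsq N (A g) \<le> c\<^sup>2 * nsq N g"
    proof (cases "0 \<le> c")
      case True
      have "(sqrt (nsq N (A g)))\<^sup>2 \<le> (c * sqrt (nsq N g))\<^sup>2" by (rule power_mono[OF a p(1)])
      then show ?thesis using nsq_nonneg[of N "A g"] nsq_nonneg[of N g] by (simp add: power_mult_distrib)
    next
      case False
      then have "c * sqrt (nsq N g) \<le> 0" using p by (simp add: mult_nonpos_nonneg)
      then have "sqrt (nsq N (A g)) = 0" using a p by linarith
      then have "nsq N (A g) = 0" by simp
      then show ?thesis using nsq_nonneg[of N g] by simp
    qed
  qed
  then show ?thesis by (intro exI[of _ "c\<^sup>2"]) auto
qed

lemma bop_sum: assumes "bounded_op N A" "finite C" "\<forall>c\<in>C. \<phi> c \<in> L2 N"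
  shows "AE x in N. A (\<lambda>y. \<Sum>c\<in>C. \<phi> c y) x = (\<Sum>c\<in>C. A (\<phi> c) x)"
  using assms(2,3)
proof (induction C rule: finite_induct)
  case empty
  then show ?case using bop_zero[OF assms(1)] by simp
next
  case (insert a C)
  have "AE x in N. A (\<lambda>y. \<phi> a y + (\<lambda>y. \<Sum>c\<in>C. \<phi> c y) y) x = A (\<phi> a) x + A (\<lambda>y. \<Sum>c\<in>C. \<phi> c y) x"
    using insert by (intro bop_add[OF assms(1)] L2_sum) auto
  with insert show ?case by (auto elim: eventually_elim2)
qed

lemma inner_diff_left: assumes "a \<in> L2 N" "b \<in> L2 N" "v \<in> L2 N"
  shows "l2_inner N (\<lambda>x. a x - b x) v = l2_inner N a v - l2_inner N b v"
  unfolding l2_inner_def using inner_integrable[OF assms(1,3)] inner_integrable[OF assms(2,3)]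
  by (simp add: left_diff_distrib)

lemma adjoint_resp_ae:
  assumes adj: "is_adjoint N T B" and TL2: "\<forall>g\<in>L2 N. T g \<in> L2 N"
    and u: "u \<in> L2 N" and u': "u' \<in> L2 N" and ae: "AE x in N. u x = u' x"
  shows "AE x in N. T u x = T u' x"
proof -
  define v where "v = (\<lambda>x. T u x - T u' x)"
  have v: "v \<in> L2 N" unfolding v_def using TL2 u u' by (intro L2_diff) auto
  have Bv: "B v \<in> L2 N" using adj v by (auto simp: is_adjoint_def)
  have "l2_inner N (T u) v = l2_inner N u (B v)" using adj u v by (auto simp: is_adjoint_def)
  also have "\<dots> = l2_inner N u' (B v)" unfolding l2_inner_def
    using ae L2_D(1)[OF u] L2_D(1)[OF u'] L2_D(1)[OF Bv]
    by (intro integral_cong_AE) (auto elim: eventually_mono)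
  also have "\<dots> = l2_inner N (T u') v" using adj u' v by (auto simp: is_adjoint_def)
  finally have "l2_inner N v v = 0"
    unfolding v_def using TL2 u u' v[unfolded v_def] by (subst inner_diff_left) auto
  then have "nsq N v = 0" using inner_self[OF v] by simp
  then have "AE x in N. v x = 0" using nsq_zero[OF v] by simp
  then show ?thesis by eventually_elim (simp add: v_def)
qed

lemma nsq_diff: assumes "g \<in> L2 N" "h \<in> L2 N"
  shows "nsq N (\<lambda>x. g x - h x) \<le> 2 * nsq N g + 2 * nsq N h"
proof -
  have "nsq N (\<lambda>x. - h x) = nsq N h" unfolding nsq_def by simp
  then show ?thesis using nsq_add[OF assms(1) L2_uminus[OF assms(2)]] by simp
qed

lemma L2_ind: "S \<in> sets N \<Longrightarrow> g \<in> L2 N \<Longrightarrow> (\<lambda>y. indicator S y * g y) \<in> L2 N"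
  by (rule L2_mult_bdd[where K=1]) (auto simp: indicator_def)

lemma nsq_tendsto_zero:
  assumes u: "u \<in> L2 N" and m: "\<And>i. \<phi> i \<in> borel_measurable N"
    and b: "\<And>i x. cmod (\<phi> i x) \<le> 1" and t: "\<And>x. x \<in> space N \<Longrightarrow> (\<lambda>i. \<phi> i x) \<longlonglongrightarrow> 0"
  shows "(\<lambda>i. nsq N (\<lambda>x. \<phi> i x * u x)) \<longlonglongrightarrow> 0"
proof -
  have "(\<lambda>i. LINT x|N. (cmod (\<phi> i x * u x))\<^sup>2) \<longlonglongrightarrow> (LINT x|N. 0)"
  proof (rule integral_dominated_convergence[where w="\<lambda>x. (cmod (u x))\<^sup>2"])
    show "(\<lambda>x. 0::real) \<in> borel_measurable N" by simp
    show "\<And>i. (\<lambda>x. (cmod (\<phi> i x * u x))\<^sup>2) \<in> borel_measurable N"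
      using m L2_D(1)[OF u] by measurable
    show "integrable N (\<lambda>x. (cmod (u x))\<^sup>2)" using L2_D(2)[OF u] .
    show "AE x in N. (\<lambda>i. (cmod (\<phi> i x * u x))\<^sup>2) \<longlonglongrightarrow> 0"
    proof (rule AE_I2)
      fix x assume x: "x \<in> space N"
      have "(\<lambda>i. (cmod (\<phi> i x * u x))\<^sup>2) \<longlonglongrightarrow> (cmod (0 * u x))\<^sup>2"
        by (intro tendsto_intros t[OF x])
      then show "(\<lambda>i. (cmod (\<phi> i x * u x))\<^sup>2) \<longlonglongrightarrow> 0" by simp
    qed
    fix i
    show "AE x in N. norm ((cmod (\<phi> i x * u x))\<^sup>2) \<le> (cmod (u x))\<^sup>2"
    proof (rule AE_I2)
      fix x
      have "cmod (\<phi> i x) * cmod (u x) \<le> 1 * cmod (u x)"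
        using b[of i x] by (intro mult_right_mono) auto
      then have "cmod (\<phi> i x * u x) \<le> cmod (u x)" by (simp add: norm_mult)
      then show "norm ((cmod (\<phi> i x * u x))\<^sup>2) \<le> (cmod (u x))\<^sup>2"
        by (simp add: power_mono)
    qed
  qed
  then show ?thesis by (simp add: nsq_def)
qed

definition Qc :: "'x measure \<Rightarrow> (('x \<Rightarrow> complex) \<Rightarrow> ('x \<Rightarrow> complex)) \<Rightarrow> 'x set \<Rightarrow> bool" where
  "Qc N A S \<longleftrightarrow> (\<forall>g\<in>L2 N. AE x in N. A (\<lambda>y. indicator S y * g y) x = indicator S x * A g x)"

lemma Qc_empty: "bounded_op N A \<Longrightarrow> Qc N A {}"
  unfolding Qc_def using bop_zero[of N A] by simp

lemma Qc_compl: assumes A: "bounded_op N A" and S: "S \<in> sets N" and Q: "Qc N A S"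
  shows "Qc N A (space N - S)"
  unfolding Qc_def
proof
  fix g assume g: "g \<in> L2 N"
  have "AE x in N. A (\<lambda>y. indicator (space N - S) y * g y) x = A (\<lambda>y. g y - indicator S y * g y) x"
    using g S by (intro bop_ae[OF A, rotated 2] L2_ind L2_diff AE_I2; (simp add: indicator_def)?)
  moreover have "AE x in N. A (\<lambda>y. g y - indicator S y * g y) x = A g x - A (\<lambda>y. indicator S y * g y) x"
    using g S by (intro bop_diff[OF A] L2_ind)
  moreover have "AE x in N. A (\<lambda>y. indicator S y * g y) x = indicator S x * A g x"
    using Q g by (auto simp: Qc_def)
  moreover have "AE x in N. x \<in> space N" by simp
  ultimately show "AE x in N. A (\<lambda>y. indicator (space N - S) y * g y) x = indicator (space N - S) x * A g x"
    by eventually_elim (auto simp: indicator_def)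
qed

lemma Qc_int: assumes A: "bounded_op N A" and S: "S \<in> sets N" "T \<in> sets N" and Q: "Qc N A S" "Qc N A T"
  shows "Qc N A (S \<inter> T)"
  unfolding Qc_def
proof
  fix g assume g: "g \<in> L2 N"
  have e: "(\<lambda>y. indicator (S \<inter> T) y * g y) = (\<lambda>y. indicator S y * (\<lambda>y. indicator T y * g y) y)"
    by (auto simp: indicator_def)
  have "AE x in N. A (\<lambda>y. indicator S y * (\<lambda>y. indicator T y * g y) y) x = indicator S x * A (\<lambda>y. indicator T y * g y) x"
    using Q(1) L2_ind[OF S(2) g] by (auto simp: Qc_def)
  moreover have "AE x in N. A (\<lambda>y. indicator T y * g y) x = indicator T x * A g x"
    using Q(2) g by (auto simp: Qc_def)
  ultimately show "AE x in N. A (\<lambda>y. indicator (S \<inter> T) y * g y) x = indicator (S \<inter> T) x * A g x"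
    unfolding e by eventually_elim (auto simp: indicator_def)
qed

lemma Qc_Un: assumes A: "bounded_op N A" and S: "S \<in> sets N" "T \<in> sets N" and Q: "Qc N A S" "Qc N A T"
  shows "Qc N A (S \<union> T)"
proof -
  have "S \<union> T = space N - ((space N - S) \<inter> (space N - T))"
    using S sets.sets_into_space by auto
  moreover have "Qc N A (space N - ((space N - S) \<inter> (space N - T)))"
    using S Q by (intro Qc_compl Qc_int A) auto
  ultimately show ?thesis by simp
qed

lemma Qc_mono_Un: assumes A: "bounded_op N A" and S: "\<And>i. S i \<in> sets N" and inc: "incseq S"
  and Q: "\<And>i. Qc N A (S i)"
  shows "Qc N A (\<Union>i. S i)"
  unfolding Qc_def
proof
  fix g assume g: "g \<in> L2 N"
  define U where "U = (\<Union>i. S i)"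
  have U: "U \<in> sets N" using S unfolding U_def by auto
  obtain C where C: "C \<ge> 0" "\<forall>g\<in>L2 N. nsq N (A g) \<le> C * nsq N g" using bop_norm[OF A] by blast
  have Ag: "A g \<in> L2 N" using bop_L2[OF A g] .
  define d where "d = (\<lambda>x. A (\<lambda>y. indicator U y * g y) x - indicator U x * A g x)"
  have d: "d \<in> L2 N" unfolding d_def using U g Ag by (intro L2_diff bop_L2[OF A] L2_ind)
  define a where "a i = nsq N (\<lambda>x. indicator (U - S i) x * g x)" for i
  define b where "b i = nsq N (\<lambda>x. indicator (U - S i) x * A g x)" for i
  have conv: "(\<lambda>i. nsq N (\<lambda>x. indicator (U - S i) x * u x)) \<longlonglongrightarrow> 0" if u: "u \<in> L2 N" for u
  proof (rule nsq_tendsto_zero[OF u])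
    show "\<And>i. (indicator (U - S i) :: _ \<Rightarrow> complex) \<in> borel_measurable N" using U S by measurable
    show "\<And>i x. cmod (indicator (U - S i) x :: complex) \<le> 1" by (auto simp: indicator_def)
    fix x
    show "(\<lambda>i. indicator (U - S i) x :: complex) \<longlonglongrightarrow> 0"
    proof (cases "x \<in> U")
      case True
      then obtain i0 where "x \<in> S i0" unfolding U_def by auto
      then have "\<forall>i\<ge>i0. x \<in> S i" using inc by (auto simp: incseq_def)
      then have "eventually (\<lambda>i. (indicator (U - S i) x :: complex) = 0) sequentially"
        by (auto simp: eventually_sequentially indicator_def)
      then show ?thesis by (rule tendsto_eventually)
    next
      case False
      then show ?thesis by (simp add: indicator_def)
    qed
  qed
  have bnd: "nsq N d \<le> 2 * C * a i + 2 * b i" for i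
  proof -
    have Si: "S i \<subseteq> U" unfolding U_def by auto
    have g1: "(\<lambda>y. indicator (S i) y * g y) \<in> L2 N" using L2_ind[OF S g] .
    have g2: "(\<lambda>y. indicator (U - S i) y * g y) \<in> L2 N" using L2_ind[OF _ g] U S by auto
    have "AE x in N. A (\<lambda>y. indicator U y * g y) x = A (\<lambda>y. (\<lambda>y. indicator (S i) y * g y) y + (\<lambda>y. indicator (U - S i) y * g y) y) x"
      apply (rule bop_ae[OF A])
      using g1 g2 U g Si apply (auto intro!: L2_ind L2_add)
      apply (rule AE_I2)
      using Si by (auto simp: indicator_def)
    moreover have "AE x in N. A (\<lambda>y. (\<lambda>y. indicator (S i) y * g y) y + (\<lambda>y. indicator (U - S i) y * g y) y) x
        = A (\<lambda>y. indicator (S i) y * g y) x + A (\<lambda>y. indicator (U - S i) y * g y) x"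
      by (rule bop_add[OF A g1 g2])
    moreover have "AE x in N. A (\<lambda>y. indicator (S i) y * g y) x = indicator (S i) x * A g x"
      using Q[of i] g by (auto simp: Qc_def)
    ultimately have "AE x in N. d x = A (\<lambda>y. indicator (U - S i) y * g y) x - indicator (U - S i) x * A g x"
      unfolding d_def by eventually_elim (use Si in \<open>auto simp: indicator_def\<close>)
    then have "nsq N d = nsq N (\<lambda>x. A (\<lambda>y. indicator (U - S i) y * g y) x - indicator (U - S i) x * A g x)"
      apply (rule nsq_cong[OF _ d])
      apply (rule L2_diff[OF bop_L2[OF A g2] L2_ind])
      using U S Ag by auto
    also have "\<dots> \<le> 2 * nsq N (A (\<lambda>y. indicator (U - S i) y * g y)) + 2 * b i"
      unfolding b_def using g g2 Ag U S by (intro nsq_diff bop_L2[OF A] L2_ind) auto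
    also have "\<dots> \<le> 2 * (C * a i) + 2 * b i"
      using C(2)[rule_format, OF g2] unfolding a_def by simp
    finally show ?thesis by simp
  qed
  have "(\<lambda>i. 2 * C * a i + 2 * b i) \<longlonglongrightarrow> 2 * C * 0 + 2 * 0"
    unfolding a_def b_def using conv[OF g] conv[OF Ag] by (intro tendsto_add tendsto_mult tendsto_const) auto
  then have "nsq N d \<le> 0"
    using bnd by (intro LIMSEQ_le_const[where X="\<lambda>i. 2 * C * a i + 2 * b i"]) auto
  then have "AE x in N. d x = 0" using nsq_zero[OF d] by simp
  then show "AE x in N. A (\<lambda>y. indicator (\<Union>i. S i) y * g y) x = indicator (\<Union>i. S i) x * A g x"
    unfolding d_def U_def by eventually_elim simp
qed

lemma Qc_countable_Un: fixes S :: "nat \<Rightarrow> _" assumes A: "bounded_op N A" and S: "\<And>i. S i \<in> sets N" and Q: "\<And>i. Qc N A (S i)"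
  shows "Qc N A (\<Union>i. S i)"
proof -
  define T where "T n = (\<Union>i\<le>n. S i)" for n
  have T: "T n \<in> sets N \<and> Qc N A (T n)" for n
  proof (induction n)
    case 0 then show ?case using S Q by (simp add: T_def)
  next
    case (Suc n)
    have "T (Suc n) = T n \<union> S (Suc n)" by (auto simp: T_def atMost_Suc)
    then show ?case using Suc S Q by (auto intro: Qc_Un[OF A])
  qed
  have "(\<Union>i. T i) = (\<Union>i. S i)" by (auto simp: T_def)
  moreover have "incseq T" unfolding incseq_def T_def by (auto simp: atMost_iff) (meson atMost_iff le_trans)
  ultimately show ?thesis using Qc_mono_Un[OF A, of T] T by auto
qed

lemma Qc_sigma:
  assumes A: "bounded_op N A" and sN: "sets N = sigma_sets (space N) G" and G: "\<And>S. S \<in> G \<Longrightarrow> Qc N A S"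
  and S: "S \<in> sets N"
  shows "Qc N A S"
proof -
  have "S \<in> sigma_sets (space N) G" using S sN by simp
  then show ?thesis
  proof (induction rule: sigma_sets.induct)
    case (Basic a) then show ?case by (rule G)
  next
    case Empty then show ?case by (rule Qc_empty[OF A])
  next
    case (Compl a)
    then show ?case using sN by (intro Qc_compl[OF A]) auto
  next
    case (Union a)
    then show ?case using sN by (intro Qc_countable_Un[OF A]) auto
  qed
qed

lemma simple_rep_complex:
  fixes f :: "'a \<Rightarrow> complex"
  assumes f: "simple_function M f" and x: "x \<in> space M"
  shows "f x = (\<Sum>y \<in> f ` space M. y * indicator (f -` {y} \<inter> space M) x)"
  (is "?l = ?r")
proof -
  have "?r = (\<Sum>y \<in> f ` space M.
    (if y = f x then y * indicator (f -` {y} \<inter> space M) x else 0))"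
    by (auto intro!: sum.cong)
  also have "... =  f x *  indicator (f -` {f x} \<inter> space M) x"
    using assms by (auto dest: simple_functionD)
  also have "... = f x" using x by (auto simp: indicator_def)
  finally show ?thesis by auto
qed

lemma L2_ae: assumes "g \<in> L2 N" "f \<in> borel_measurable N" "AE x in N. f x = g x" shows "f \<in> L2 N"
  using assms(3) by (intro L2_bound[OF assms(1,2), where K=1]) (auto elim: eventually_mono)

lemma nsq_mult_bdd: assumes g: "g \<in> L2 N" and m: "\<phi> \<in> borel_measurable N" and b: "AE x in N. cmod (\<phi> x) \<le> K"
  shows "nsq N (\<lambda>x. \<phi> x * g x) \<le> K\<^sup>2 * nsq N g"
proof -
  have "nsq N (\<lambda>x. \<phi> x * g x) \<le> (LINT x|N. K\<^sup>2 * (cmod (g x))\<^sup>2)"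
    unfolding nsq_def
  proof (rule integral_mono_AE)
    show "integrable N (\<lambda>x. (cmod (\<phi> x * g x))\<^sup>2)" using L2_mult_bdd[OF g m b] by (rule L2_D)
    show "integrable N (\<lambda>x. K\<^sup>2 * (cmod (g x))\<^sup>2)" using L2_D(2)[OF g] by simp
    show "AE x in N. (cmod (\<phi> x * g x))\<^sup>2 \<le> K\<^sup>2 * (cmod (g x))\<^sup>2"
      using b
    proof eventually_elim
      fix x assume a: "cmod (\<phi> x) \<le> K"
      have "cmod (\<phi> x) * cmod (g x) \<le> K * cmod (g x)" using a by (intro mult_right_mono) auto
      then have "(cmod (\<phi> x) * cmod (g x))\<^sup>2 \<le> (K * cmod (g x))\<^sup>2" by (intro power_mono) auto
      then show "(cmod (\<phi> x * g x))\<^sup>2 \<le> K\<^sup>2 * (cmod (g x))\<^sup>2" by (simp add: norm_mult power_mult_distrib)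
    qed
  qed
  also have "\<dots> = K\<^sup>2 * nsq N g" by (simp add: nsq_def)
  finally show ?thesis .
qed

lemma nsq_tendsto_dom:
  assumes g: "g \<in> L2 N" and u: "\<And>i. u i \<in> borel_measurable N"
    and b: "\<And>i x. x \<in> space N \<Longrightarrow> cmod (u i x) \<le> B * cmod (g x)"
    and t: "\<And>x. x \<in> space N \<Longrightarrow> (\<lambda>i. u i x) \<longlonglongrightarrow> g x"
  shows "(\<lambda>i. nsq N (\<lambda>x. g x - u i x)) \<longlonglongrightarrow> 0"
proof -
  have "(\<lambda>i. LINT x|N. (cmod (g x - u i x))\<^sup>2) \<longlonglongrightarrow> (LINT x|N. 0)"
  proof (rule integral_dominated_convergence[where w="\<lambda>x. (1 + \<bar>B\<bar>)\<^sup>2 * (cmod (g x))\<^sup>2"])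
    show "(\<lambda>x. 0::real) \<in> borel_measurable N" by simp
    show "\<And>i. (\<lambda>x. (cmod (g x - u i x))\<^sup>2) \<in> borel_measurable N"
      using u L2_D(1)[OF g] by measurable
    show "integrable N (\<lambda>x. (1 + \<bar>B\<bar>)\<^sup>2 * (cmod (g x))\<^sup>2)" using L2_D(2)[OF g] by simp
    show "AE x in N. (\<lambda>i. (cmod (g x - u i x))\<^sup>2) \<longlonglongrightarrow> 0"
    proof (rule AE_I2)
      fix x assume x: "x \<in> space N"
      have "(\<lambda>i. (cmod (g x - u i x))\<^sup>2) \<longlonglongrightarrow> (cmod (g x - g x))\<^sup>2"
        by (intro tendsto_intros t[OF x])
      then show "(\<lambda>i. (cmod (g x - u i x))\<^sup>2) \<longlonglongrightarrow> 0" by simp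
    qed
    fix i
    show "AE x in N. norm ((cmod (g x - u i x))\<^sup>2) \<le> (1 + \<bar>B\<bar>)\<^sup>2 * (cmod (g x))\<^sup>2"
    proof (rule AE_I2)
      fix x assume x: "x \<in> space N"
      have "cmod (g x - u i x) \<le> cmod (g x) + cmod (u i x)" by (rule norm_triangle_ineq4)
      also have "\<dots> \<le> cmod (g x) + \<bar>B\<bar> * cmod (g x)" using b[OF x, of i]
        by (meson abs_ge_self add_left_mono mult_right_mono norm_ge_zero order_trans)
      finally have "cmod (g x - u i x) \<le> (1 + \<bar>B\<bar>) * cmod (g x)" by (simp add: algebra_simps)
      then have "(cmod (g x - u i x))\<^sup>2 \<le> ((1 + \<bar>B\<bar>) * cmod (g x))\<^sup>2" by (intro power_mono) auto
      then show "norm ((cmod (g x - u i x))\<^sup>2) \<le> (1 + \<bar>B\<bar>)\<^sup>2 * (cmod (g x))\<^sup>2"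
        by (simp add: power_mult_distrib)
    qed
  qed
  then show ?thesis by (simp add: nsq_def)
qed

lemma mult_rep:
  assumes A: "bounded_op N A" and Q: "\<And>S. S \<in> sets N \<Longrightarrow> Qc N A S"
    and w: "w \<in> L2 N" and wnz: "\<And>x. x \<in> space N \<Longrightarrow> w x \<noteq> 0"
  shows "\<exists>h. h \<in> borel_measurable N \<and> (\<exists>K. AE x in N. cmod (h x) \<le> K) \<and>
            (\<forall>g\<in>L2 N. AE x in N. A g x = h x * g x)"
proof -
  define h where "h x = A w x / w x" for x
  have Aw: "A w \<in> L2 N" by (rule bop_L2[OF A w])
  have hm: "h \<in> borel_measurable N" unfolding h_def using L2_D(1)[OF Aw] L2_D(1)[OF w] by measurable
  have Aww: "A w x = h x * w x" if "x \<in> space N" for x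
    using wnz[OF that] by (simp add: h_def)
  have ind: "AE x in N. A (\<lambda>y. indicator S y * w y) x = h x * (indicator S x * w x)" if S: "S \<in> sets N" for S
  proof -
    have "AE x in N. A (\<lambda>y. indicator S y * w y) x = indicator S x * A w x"
      using Q[OF S] w by (auto simp: Qc_def)
    moreover have "AE x in N. x \<in> space N" by simp
    ultimately show ?thesis by eventually_elim (simp add: Aww)
  qed
  obtain C where C: "C \<ge> 0" "\<forall>g\<in>L2 N. nsq N (A g) \<le> C * nsq N g" using bop_norm[OF A] by blast
  define K where "K = C + 1"
  have KK: "K\<^sup>2 = C*C + 2*C + 1" unfolding K_def by (simp add: power2_eq_square algebra_simps)
  have CC: "0 \<le> C*C" using C(1) by simp
  have K: "C < K\<^sup>2" "0 \<le> K" using KK CC C(1) unfolding K_def by linarith+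
  have hb: "AE x in N. cmod (h x) \<le> K"
  proof -
    define S where "S = {x \<in> space N. K < cmod (h x)}"
    have S: "S \<in> sets N" unfolding S_def using hm by measurable
    define u where "u = (\<lambda>y. indicator S y * w y)"
    have u: "u \<in> L2 N" unfolding u_def by (rule L2_ind[OF S w])
    have Au: "AE x in N. A u x = h x * u x" using ind[OF S] by (simp add: u_def)
    have hu: "(\<lambda>x. h x * u x) \<in> L2 N"
      using Au hm L2_D(1)[OF u] by (intro L2_ae[OF bop_L2[OF A u]]) (auto elim: eventually_mono)
    have "K\<^sup>2 * nsq N u = (LINT x|N. K\<^sup>2 * (cmod (u x))\<^sup>2)" by (simp add: nsq_def)
    also have "\<dots> \<le> nsq N (\<lambda>x. h x * u x)" unfolding nsq_def
    proof (rule integral_mono)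
      show "integrable N (\<lambda>x. K\<^sup>2 * (cmod (u x))\<^sup>2)" using L2_D(2)[OF u] by simp
      show "integrable N (\<lambda>x. (cmod (h x * u x))\<^sup>2)" using L2_D(2)[OF hu] .
      fix x
      show "K\<^sup>2 * (cmod (u x))\<^sup>2 \<le> (cmod (h x * u x))\<^sup>2"
      proof (cases "x \<in> S")
        case True
        then have "K \<le> cmod (h x)" by (simp add: S_def)
        then have "K * cmod (u x) \<le> cmod (h x) * cmod (u x)" by (intro mult_right_mono) auto
        then have "(K * cmod (u x))\<^sup>2 \<le> (cmod (h x) * cmod (u x))\<^sup>2" using K(2) by (intro power_mono) auto
        then show ?thesis by (simp add: norm_mult power_mult_distrib)
      next
        case False
        then show ?thesis by (simp add: u_def)
      qed
    qed
    also have "\<dots> = nsq N (A u)" using Au hu bop_L2[OF A u] by (intro nsq_cong) (auto elim: eventually_mono)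
    also have "\<dots> \<le> C * nsq N u" using C(2) u by auto
    finally have "K\<^sup>2 * nsq N u \<le> C * nsq N u" .
    then have "(K\<^sup>2 - C) * nsq N u \<le> 0" by (simp add: algebra_simps)
    then have "nsq N u \<le> 0" using K(1) by (auto simp: mult_le_0_iff)
    then have "AE x in N. u x = 0" by (rule nsq_zero[OF u])
    moreover have "AE x in N. x \<in> space N" by simp
    ultimately show ?thesis
      by eventually_elim (auto simp: u_def S_def indicator_def wnz split: if_splits)
  qed
  have simp_rep: "AE x in N. A (\<lambda>y. \<psi> y * w y) x = h x * (\<psi> x * w x)" if \<psi>: "simple_function N \<psi>" for \<psi>
  proof -
    define V where "V = \<psi> ` space N"
    define Sc where "Sc c = \<psi> -` {c} \<inter> space N" for c
    have V: "finite V" unfolding V_def using simple_functionD(1)[OF \<psi>] .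
    have Sc: "Sc c \<in> sets N" for c unfolding Sc_def using simple_functionD(2)[OF \<psi>] .
    have terms: "\<forall>c\<in>V. (\<lambda>y. c * (indicator (Sc c) y * w y)) \<in> L2 N"
      using L2_scale[OF L2_ind[OF Sc w]] by blast
    have rep: "\<psi> x * w x = (\<Sum>c\<in>V. c * (indicator (Sc c) x * w x))" if "x \<in> space N" for x
    proof -
      have eq: "\<psi> x = (\<Sum>c\<in>V. c * indicator (Sc c) x)"
        using simple_rep_complex[OF \<psi> that] unfolding V_def Sc_def .
      have "\<psi> x * w x = (\<Sum>c\<in>V. c * indicator (Sc c) x) * w x" by (simp only: eq)
      also have "\<dots> = (\<Sum>c\<in>V. c * indicator (Sc c) x * w x)" by (rule sum_distrib_right)
      also have "\<dots> = (\<Sum>c\<in>V. c * (indicator (Sc c) x * w x))" by (simp only: mult.assoc)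
      finally show ?thesis .
    qed
    have sumL2: "(\<lambda>y. \<Sum>c\<in>V. c * (indicator (Sc c) y * w y)) \<in> L2 N" using L2_sum[OF V terms] .
    have psiL2: "(\<lambda>y. \<psi> y * w y) \<in> L2 N"
      using borel_measurable_simple_function[OF \<psi>] L2_D(1)[OF w]
      by (intro L2_ae[OF sumL2]) (auto intro!: AE_I2 rep)
    have "AE x in N. A (\<lambda>y. \<psi> y * w y) x = A (\<lambda>y. \<Sum>c\<in>V. c * (indicator (Sc c) y * w y)) x"
      by (rule bop_ae[OF A psiL2 sumL2]) (auto intro!: AE_I2 rep)
    moreover have "AE x in N. A (\<lambda>y. \<Sum>c\<in>V. c * (indicator (Sc c) y * w y)) x = (\<Sum>c\<in>V. A (\<lambda>y. c * (indicator (Sc c) y * w y)) x)"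
      by (rule bop_sum[OF A V terms])
    moreover have "AE x in N. \<forall>c\<in>V. A (\<lambda>y. c * (indicator (Sc c) y * w y)) x = c * (h x * (indicator (Sc c) x * w x))"
    proof (rule AE_finite_allI[OF V])
      fix c assume "c \<in> V"
      have "AE x in N. A (\<lambda>y. c * (\<lambda>y. indicator (Sc c) y * w y) y) x = c * A (\<lambda>y. indicator (Sc c) y * w y) x"
        by (rule bop_scale[OF A L2_ind[OF Sc w]])
      with ind[OF Sc[of c]] show "AE x in N. A (\<lambda>y. c * (indicator (Sc c) y * w y)) x = c * (h x * (indicator (Sc c) x * w x))"
        by eventually_elim simp
    qed
    moreover have "AE x in N. x \<in> space N" by simp
    ultimately show ?thesis
    proof eventually_elim
      case (elim x)
      then have "A (\<lambda>y. \<psi> y * w y) x = (\<Sum>c\<in>V. c * (h x * (indicator (Sc c) x * w x)))" by simp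
      also have "\<dots> = h x * (\<Sum>c\<in>V. c * (indicator (Sc c) x * w x))"
        by (simp add: sum_distrib_left mult.left_commute)
      also have "\<dots> = h x * (\<psi> x * w x)" using rep[OF elim(4)] by simp
      finally show ?case .
    qed
  qed
  have main: "AE x in N. A g x = h x * g x" if g: "g \<in> L2 N" for g
  proof -
    have qm: "(\<lambda>x. g x / w x) \<in> borel_measurable N" using L2_D(1)[OF g] L2_D(1)[OF w] by measurable
    obtain F where F: "\<And>i. simple_function N (F i)" "\<And>x. x \<in> space N \<Longrightarrow> (\<lambda>i. F i x) \<longlonglongrightarrow> g x / w x"
      "\<And>i x. x \<in> space N \<Longrightarrow> dist (F i x) 0 \<le> 2 * dist (g x / w x) 0"
      using borel_measurable_implies_sequence_metric[OF qm, of 0] by blast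
    define u where "u i x = F i x * w x" for i x
    have um: "u i \<in> borel_measurable N" for i
      unfolding u_def using borel_measurable_simple_function[OF F(1)] L2_D(1)[OF w] by measurable
    have ub: "cmod (u i x) \<le> 2 * cmod (g x)" if x: "x \<in> space N" for i x
    proof -
      have "cmod (F i x) \<le> 2 * cmod (g x / w x)" using F(3)[OF x, of i] by (simp add: dist_norm)
      then have "cmod (F i x) * cmod (w x) \<le> 2 * cmod (g x / w x) * cmod (w x)" by (intro mult_right_mono) auto
      then show ?thesis using wnz[OF x] by (simp add: u_def norm_mult norm_divide)
    qed
    have uL2: "u i \<in> L2 N" for i
      using ub by (intro L2_bound[OF g um, where K=2]) (auto intro!: AE_I2)
    have ut: "(\<lambda>i. u i x) \<longlonglongrightarrow> g x" if x: "x \<in> space N" for x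
    proof -
      have "(\<lambda>i. F i x * w x) \<longlonglongrightarrow> g x / w x * w x" by (intro tendsto_intros F(2)[OF x])
      then show ?thesis using wnz[OF x] by (simp add: u_def)
    qed
    have Au: "AE x in N. A (u i) x = h x * u i x" for i
      using simp_rep[OF F(1)[of i]] by (simp add: u_def[abs_def])
    have hg: "(\<lambda>x. h x * g x) \<in> L2 N" by (rule L2_mult_bdd[OF g hm hb])
    define d where "d x = A g x - h x * g x" for x
    have d: "d \<in> L2 N" unfolding d_def[abs_def] using bop_L2[OF A g] hg by (rule L2_diff)
    have bnd: "nsq N d \<le> (2 * C + 2 * K\<^sup>2) * nsq N (\<lambda>x. g x - u i x)" for i
    proof -
      have gu: "(\<lambda>x. g x - u i x) \<in> L2 N" using g uL2 by (rule L2_diff)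
      have hgu: "(\<lambda>x. h x * (g x - u i x)) \<in> L2 N" by (rule L2_mult_bdd[OF gu hm hb])
      have "AE x in N. A (\<lambda>y. g y - u i y) x = A g x - A (u i) x" by (rule bop_diff[OF A g uL2])
      with Au[of i] have "AE x in N. d x = A (\<lambda>y. g y - u i y) x - h x * (g x - u i x)"
        by eventually_elim (simp add: d_def algebra_simps)
      then have "nsq N d = nsq N (\<lambda>x. A (\<lambda>y. g y - u i y) x - h x * (g x - u i x))"
        by (rule nsq_cong[OF _ d L2_diff[OF bop_L2[OF A gu] hgu]])
      also have "\<dots> \<le> 2 * nsq N (A (\<lambda>y. g y - u i y)) + 2 * nsq N (\<lambda>x. h x * (g x - u i x))"
        by (rule nsq_diff[OF bop_L2[OF A gu] hgu])
      also have "\<dots> \<le> 2 * (C * nsq N (\<lambda>x. g x - u i x)) + 2 * (K\<^sup>2 * nsq N (\<lambda>x. g x - u i x))"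
        using C(2) gu nsq_mult_bdd[OF gu hm hb] by (intro add_mono mult_left_mono) auto
      finally show ?thesis by (simp add: algebra_simps)
    qed
    have "(\<lambda>i. (2 * C + 2 * K\<^sup>2) * nsq N (\<lambda>x. g x - u i x)) \<longlonglongrightarrow> (2 * C + 2 * K\<^sup>2) * 0"
      by (intro tendsto_mult tendsto_const nsq_tendsto_dom[OF g um, where B=2] ub ut)
    then have "nsq N d \<le> 0"
      using bnd by (intro LIMSEQ_le_const[where X="\<lambda>i. (2 * C + 2 * K\<^sup>2) * nsq N (\<lambda>x. g x - u i x)"]) auto
    then have "AE x in N. d x = 0" using nsq_zero[OF d] by simp
    then show ?thesis by eventually_elim (simp add: d_def)
  qed
  show ?thesis using hm hb main by blast
qed

lemma AE_False_iff: "(AE x in N. False) \<longleftrightarrow> emeasure N (space N) = 0"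
  by (rule AE_iff_measurable) auto

lemma const_real_01:
  fixes u :: "'a \<Rightarrow> real"
  assumes ub: "AE x in N. \<bar>u x\<bar> \<le> K"
    and d: "\<And>r. (AE x in N. u x \<le> r) \<or> (AE x in N. r < u x)"
  shows "\<exists>c. AE x in N. u x = c"
proof (cases "emeasure N (space N) = 0")
  case True
  then have "AE x in N. False" by (simp add: AE_False_iff)
  then show ?thesis by (auto elim: eventually_mono)
next
  case False
  define S where "S = {r. AE x in N. r < u x}"
  have S1: "- K - 1 \<in> S" unfolding S_def using ub by (auto elim!: eventually_mono)
  have Sb: "r \<le> K" if "r \<in> S" for r
  proof (rule ccontr)
    assume nr: "\<not> r \<le> K"
    have "AE x in N. r < u x" using that unfolding S_def by simp
    with ub have "AE x in N. False" by eventually_elim (use nr in linarith)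
    then show False using False by (simp add: AE_False_iff)
  qed
  have bdd: "bdd_above S" unfolding bdd_above_def using Sb by blast
  define c where "c = Sup S"
  have lo: "AE x in N. \<forall>m::nat. c - 1 / Suc m < u x"
  proof (rule AE_all_countable[THEN iffD2], rule allI)
    fix m :: nat
    have "c - 1 / Suc m < Sup S" unfolding c_def by simp
    then obtain r where r: "r \<in> S" "c - 1 / Suc m < r" using less_cSup_iff[OF _ bdd] S1 by blast
    then show "AE x in N. c - 1 / Suc m < u x" unfolding S_def by (auto elim: eventually_mono)
  qed
  have hi: "AE x in N. \<forall>m::nat. u x \<le> c + 1 / Suc m"
  proof (rule AE_all_countable[THEN iffD2], rule allI)
    fix m :: nat
    have "c + 1 / Suc m \<notin> S"
    proof
      assume "c + 1 / Suc m \<in> S"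
      then have "c + 1 / Suc m \<le> c" unfolding c_def by (rule cSup_upper[OF _ bdd])
      then show False by simp
    qed
    then show "AE x in N. u x \<le> c + 1 / Suc m" using d[of "c + 1 / Suc m"] unfolding S_def by auto
  qed
  have "AE x in N. u x = c"
    using lo hi
  proof eventually_elim
    case (elim x)
    have "c \<le> u x"
    proof (rule ccontr)
      assume "\<not> c \<le> u x"
      then obtain m :: nat where "1 / Suc m < c - u x"
        using reals_Archimedean[of "c - u x"] by (auto simp: inverse_eq_divide)
      with elim(1) show False by (smt (verit))
    qed
    moreover have "u x \<le> c"
    proof (rule ccontr)
      assume "\<not> u x \<le> c"
      then obtain m :: nat where "1 / Suc m < u x - c"
        using reals_Archimedean[of "u x - c"] by (auto simp: inverse_eq_divide)
      with elim(2) show False by (smt (verit))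
    qed
    ultimately show ?case by simp
  qed
  then show ?thesis by blast
qed

lemma const_complex_01:
  fixes h :: "'a \<Rightarrow> complex"
  assumes hb: "AE x in N. cmod (h x) \<le> K"
    and dRe: "\<And>r. (AE x in N. Re (h x) \<le> r) \<or> (AE x in N. r < Re (h x))"
    and dIm: "\<And>r. (AE x in N. Im (h x) \<le> r) \<or> (AE x in N. r < Im (h x))"
  shows "\<exists>c. AE x in N. h x = c"
proof -
  have "AE x in N. \<bar>Re (h x)\<bar> \<le> K" using hb by eventually_elim (meson abs_Re_le_cmod order_trans)
  then obtain a where a: "AE x in N. Re (h x) = a" using const_real_01[OF _ dRe] by blast
  have "AE x in N. \<bar>Im (h x)\<bar> \<le> K" using hb by eventually_elim (meson abs_Im_le_cmod order_trans)
  then obtain b where b: "AE x in N. Im (h x) = b" using const_real_01[OF _ dIm] by blast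
  from a b have "AE x in N. h x = Complex a b" by eventually_elim (simp add: complex_eq_iff)
  then show ?thesis by blast
qed

lemma dich_of_ergodic:
  fixes h :: "'a \<Rightarrow> complex" and \<sigma> :: "'a \<Rightarrow> 'a"
  assumes \<sigma>: "\<sigma> \<in> measurable N N" and hm: "h \<in> borel_measurable N"
    and inv: "AE x in N. h (\<sigma> x) = h x"
    and Pm: "{x \<in> space N. P (h x)} \<in> sets N"
  shows "emeasure N (symdiff {x \<in> space N. P (h x)} (\<sigma> -` {x \<in> space N. P (h x)} \<inter> space N)) = 0"
proof -
  let ?A = "{x \<in> space N. P (h x)}"
  let ?D = "symdiff ?A (\<sigma> -` ?A \<inter> space N)"
  have Dm: "?D \<in> sets N" unfolding symdiff_def using Pm measurable_sets[OF \<sigma> Pm] by auto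
  have "AE x in N. x \<notin> ?D" using inv
  proof eventually_elim
    case (elim x)
    then show ?case using measurable_space[OF \<sigma>] by (auto simp: symdiff_def)
  qed
  then show ?thesis using AE_iff_null_sets[OF Dm] by (simp add: null_sets_def Dm)
qed

lemma dich_from_measure:
  fixes u :: "'a \<Rightarrow> real"
  assumes um: "u \<in> borel_measurable N"
    and e: "emeasure N {x \<in> space N. r < u x} = 0 \<or> emeasure N (space N - {x \<in> space N. r < u x}) = 0"
  shows "(AE x in N. u x \<le> r) \<or> (AE x in N. r < u x)"
proof -
  have m1: "{x \<in> space N. r < u x} \<in> sets N" using um by measurable
  have m2: "space N - {x \<in> space N. r < u x} \<in> sets N" using um by measurable
  have e1: "(AE x in N. u x \<le> r) \<longleftrightarrow> emeasure N {x \<in> space N. r < u x} = 0"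
    by (rule AE_iff_measurable[OF m1]) auto
  have e2: "(AE x in N. r < u x) \<longleftrightarrow> emeasure N (space N - {x \<in> space N. r < u x}) = 0"
    by (rule AE_iff_measurable[OF m2]) auto
  show ?thesis using e e1 e2 by blast
qed

lemma cov_measure:
  assumes D: "D \<in> sets M" and \<tau>: "\<tau> \<in> restrict_space M D \<rightarrow>\<^sub>M M"
    and Fm: "F \<in> borel_measurable M"
    and pf: "\<forall>B\<in>sets M. emeasure M (\<tau> -` B \<inter> D) = (\<integral>\<^sup>+ x\<in>B. ennreal ((cmod (F x))\<^sup>2) \<partial>M)"
  shows "density M (\<lambda>x. ennreal ((cmod (F x))\<^sup>2)) = distr (restrict_space M D) M \<tau>"
proof (rule measure_eqI)
  show "sets (density M (\<lambda>x. ennreal ((cmod (F x))\<^sup>2))) = sets (distr (restrict_space M D) M \<tau>)" by simp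
  fix B assume "B \<in> sets (density M (\<lambda>x. ennreal ((cmod (F x))\<^sup>2)))"
  then have B: "B \<in> sets M" by simp
  have Dsp: "D \<subseteq> space M" using sets.sets_into_space[OF D] .
  have "emeasure (distr (restrict_space M D) M \<tau>) B = emeasure (restrict_space M D) (\<tau> -` B \<inter> D)"
    using Dsp by (subst emeasure_distr[OF \<tau> B]) (simp add: space_restrict_space Int_absorb2 Int_commute)
  also have "\<dots> = emeasure M (\<tau> -` B \<inter> D)"
    using D Dsp by (subst emeasure_restrict_space) (auto simp: Int_absorb2)
  also have "\<dots> = (\<integral>\<^sup>+ x\<in>B. ennreal ((cmod (F x))\<^sup>2) \<partial>M)" using pf B by auto
  also have "\<dots> = emeasure (density M (\<lambda>x. ennreal ((cmod (F x))\<^sup>2))) B"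
    using Fm B by (subst emeasure_density) auto
  finally show "emeasure (density M (\<lambda>x. ennreal ((cmod (F x))\<^sup>2))) B = emeasure (distr (restrict_space M D) M \<tau>) B" ..
qed

lemma cov_nn:
  assumes D: "D \<in> sets M" and \<tau>: "\<tau> \<in> restrict_space M D \<rightarrow>\<^sub>M M"
    and Fm: "F \<in> borel_measurable M"
    and pf: "\<forall>B\<in>sets M. emeasure M (\<tau> -` B \<inter> D) = (\<integral>\<^sup>+ x\<in>B. ennreal ((cmod (F x))\<^sup>2) \<partial>M)"
    and \<Phi>: "\<Phi> \<in> borel_measurable M"
  shows "(\<integral>\<^sup>+ x. ennreal ((cmod (F x))\<^sup>2) * \<Phi> x \<partial>M) = (\<integral>\<^sup>+ x. \<Phi> (\<tau> x) * indicator D x \<partial>M)"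
proof -
  have "(\<integral>\<^sup>+ x. ennreal ((cmod (F x))\<^sup>2) * \<Phi> x \<partial>M) = (\<integral>\<^sup>+ x. \<Phi> x \<partial>density M (\<lambda>x. ennreal ((cmod (F x))\<^sup>2)))"
    using Fm \<Phi> by (subst nn_integral_density) auto
  also have "\<dots> = (\<integral>\<^sup>+ x. \<Phi> x \<partial>distr (restrict_space M D) M \<tau>)" by (simp add: cov_measure[OF D \<tau> Fm pf])
  also have "\<dots> = (\<integral>\<^sup>+ x. \<Phi> (\<tau> x) \<partial>restrict_space M D)" using \<Phi> \<tau> by (subst nn_integral_distr) auto
  also have "\<dots> = (\<integral>\<^sup>+ x. \<Phi> (\<tau> x) * indicator D x \<partial>M)" using D by (subst nn_integral_restrict_space) auto
  finally show ?thesis .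
qed

lemma cov_int:
  fixes \<Phi> :: "'a \<Rightarrow> complex"
  assumes D: "D \<in> sets M" and \<tau>: "\<tau> \<in> restrict_space M D \<rightarrow>\<^sub>M M"
    and Fm: "F \<in> borel_measurable M"
    and pf: "\<forall>B\<in>sets M. emeasure M (\<tau> -` B \<inter> D) = (\<integral>\<^sup>+ x\<in>B. ennreal ((cmod (F x))\<^sup>2) \<partial>M)"
    and \<Phi>: "\<Phi> \<in> borel_measurable M"
  shows "(LINT x|M. (cmod (F x))\<^sup>2 *\<^sub>R \<Phi> x) = (LINT x|M. indicator D x *\<^sub>R \<Phi> (\<tau> x))"
proof -
  have "(LINT x|M. (cmod (F x))\<^sup>2 *\<^sub>R \<Phi> x) = (LINT x|density M (\<lambda>x. ennreal ((cmod (F x))\<^sup>2)). \<Phi> x)"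
    using Fm \<Phi> by (subst integral_density) auto
  also have "\<dots> = (LINT x|distr (restrict_space M D) M \<tau>. \<Phi> x)" by (simp add: cov_measure[OF D \<tau> Fm pf])
  also have "\<dots> = (LINT x|restrict_space M D. \<Phi> (\<tau> x))" using \<Phi> \<tau> by (subst integral_distr) auto
  also have "\<dots> = (LINT x|M. indicator D x *\<^sub>R \<Phi> (\<tau> x))" using D by (subst integral_restrict_space) auto
  finally show ?thesis .
qed

lemma restr_meas:
  assumes D: "D \<in> sets M" and \<tau>: "\<tau> \<in> restrict_space M D \<rightarrow>\<^sub>M M" and \<Phi>: "\<Phi> \<in> borel_measurable M"
  shows "(\<lambda>x. indicator D x *\<^sub>R (\<Phi> (\<tau> x) :: 'b::{banach,second_countable_topology})) \<in> borel_measurable M"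
proof -
  have "(\<lambda>x. \<Phi> (\<tau> x)) \<in> borel_measurable (restrict_space M D)"
    using measurable_compose[OF \<tau> \<Phi>] by simp
  then show ?thesis using D by (subst borel_measurable_restrict_space_iff[symmetric]) auto
qed


definition opset where
  "opset M E D R \<tau> \<sigma> F \<longleftrightarrow> \<sigma> \<in> M \<rightarrow>\<^sub>M M \<and> D \<in> sets M \<and> R \<in> sets M \<and>
     \<tau> \<in> restrict_space M D \<rightarrow>\<^sub>M M \<and> \<tau> ` D = R \<and> (\<forall>x\<in>D. \<sigma> (\<tau> x) = x) \<and>
     (\<exists>g\<in>borel_measurable M. (AE x in M. x \<in> D \<longrightarrow> g x > 0) \<and>
        (\<forall>B\<in>sets M. B \<subseteq> D \<longrightarrow> \<tau> ` B \<in> sets M \<and> emeasure M (\<tau> ` B) = (\<integral>\<^sup>+ x\<in>B. g x \<partial>M))) \<and>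
     F \<in> borel_measurable M \<and>
     (\<forall>B\<in>sets M. emeasure M (\<tau> -` B \<inter> D) = (\<integral>\<^sup>+ x\<in>B. ennreal ((cmod (F x))\<^sup>2) \<partial>M)) \<and>
     E \<in> sets M \<and> emeasure M (symdiff E (\<sigma> -` E \<inter> space M)) = 0"

lemma opsetD:
  assumes "opset M E D R \<tau> \<sigma> F"
  shows "\<sigma> \<in> M \<rightarrow>\<^sub>M M" "D \<in> sets M" "R \<in> sets M" "\<tau> \<in> restrict_space M D \<rightarrow>\<^sub>M M"
    "\<tau> ` D = R" "\<And>x. x \<in> D \<Longrightarrow> \<sigma> (\<tau> x) = x" "F \<in> borel_measurable M"
    "\<forall>B\<in>sets M. emeasure M (\<tau> -` B \<inter> D) = (\<integral>\<^sup>+ x\<in>B. ennreal ((cmod (F x))\<^sup>2) \<partial>M)"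
    "E \<in> sets M" "emeasure M (symdiff E (\<sigma> -` E \<inter> space M)) = 0"
    "\<exists>g\<in>borel_measurable M. (AE x in M. x \<in> D \<longrightarrow> g x > 0) \<and>
        (\<forall>B\<in>sets M. B \<subseteq> D \<longrightarrow> \<tau> ` B \<in> sets M \<and> emeasure M (\<tau> ` B) = (\<integral>\<^sup>+ x\<in>B. g x \<partial>M))"
  using assms unfolding opset_def by blast+

lemma op_tau_space: assumes "opset M E D R \<tau> \<sigma> F" "x \<in> D" shows "\<tau> x \<in> space M"
proof -
  have "x \<in> space (restrict_space M D)" using assms(2) sets.sets_into_space[OF opsetD(2)[OF assms(1)]]
    by (auto simp: space_restrict_space)
  then show ?thesis using measurable_space[OF opsetD(4)[OF assms(1)]] by blast
qed

lemma op_preimg: assumes "opset M E D R \<tau> \<sigma> F" "B \<in> sets M" shows "\<tau> -` B \<inter> D \<in> sets M"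
proof -
  note o = opsetD[OF assms(1)]
  have "\<tau> -` B \<inter> space (restrict_space M D) \<in> sets (restrict_space M D)"
    by (rule measurable_sets[OF o(4) assms(2)])
  moreover have "space (restrict_space M D) = D"
    using sets.sets_into_space[OF o(2)] by (auto simp: space_restrict_space)
  ultimately show ?thesis using o(2) by (simp add: sets_restrict_space_iff)
qed

lemma opV3: assumes op: "opset M E D R \<tau> \<sigma> F"
  shows "AE x in M. x \<in> D \<longrightarrow> (\<tau> x \<in> E \<longleftrightarrow> x \<in> E)"
proof -
  note o = opsetD[OF op]
  define Nb where "Nb = symdiff E (\<sigma> -` E \<inter> space M)"
  have Nb: "Nb \<in> null_sets M" unfolding Nb_def symdiff_def using o(1,9,10)
    by (auto simp: symdiff_def null_sets_def)
  have P: "\<tau> -` Nb \<inter> D \<in> sets M" using op_preimg[OF op] Nb by auto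
  have "emeasure M (\<tau> -` Nb \<inter> D) = (\<integral>\<^sup>+ x\<in>Nb. ennreal ((cmod (F x))\<^sup>2) \<partial>M)" using o(8) Nb by auto
  also have "\<dots> = 0" using Nb by (rule nn_integral_null_set)
  finally have "\<tau> -` Nb \<inter> D \<in> null_sets M" using P by auto
  then have "AE x in M. x \<notin> \<tau> -` Nb \<inter> D" by (rule AE_not_in)
  then show ?thesis
  proof (rule eventually_mono)
    fix x assume a: "x \<notin> \<tau> -` Nb \<inter> D"
    show "x \<in> D \<longrightarrow> (\<tau> x \<in> E \<longleftrightarrow> x \<in> E)"
    proof
      assume xD: "x \<in> D"
      then have "\<tau> x \<notin> Nb" using a by auto
      moreover have "\<tau> x \<in> space M" by (rule op_tau_space[OF op xD])
      moreover have "\<sigma> (\<tau> x) = x" using o(6)[OF xD] .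
      ultimately show "\<tau> x \<in> E \<longleftrightarrow> x \<in> E" unfolding Nb_def symdiff_def by auto
    qed
  qed
qed

lemma opV4: assumes op: "opset M E D R \<tau> \<sigma> F"
  shows "AE x in M. x \<notin> R \<longrightarrow> F x = 0"
proof -
  note o = opsetD[OF op]
  have B0: "space M - R \<in> sets M" using o(3) by auto
  have "\<tau> -` (space M - R) \<inter> D = {}" using o(5) by auto
  then have "(\<integral>\<^sup>+ x\<in>(space M - R). ennreal ((cmod (F x))\<^sup>2) \<partial>M) = 0" using o(8) B0 by force
  then have "AE x in M. ennreal ((cmod (F x))\<^sup>2) * indicator (space M - R) x = 0"
  proof (subst nn_integral_0_iff_AE[symmetric])
    show "(\<lambda>x. ennreal ((cmod (F x))\<^sup>2) * indicator (space M - R) x) \<in> borel_measurable M"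
      using o(7) B0 by measurable
  qed
  moreover have "AE x in M. x \<in> space M" by simp
  ultimately show ?thesis by eventually_elim (auto simp: indicator_def)
qed

lemma opV5: assumes op: "opset M E D R \<tau> \<sigma> F"
  shows "AE x in M. x \<in> R \<longrightarrow> F x \<noteq> 0"
proof -
  note o = opsetD[OF op]
  obtain g where g: "g \<in> borel_measurable M"
    "\<forall>B\<in>sets M. B \<subseteq> D \<longrightarrow> \<tau> ` B \<in> sets M \<and> emeasure M (\<tau> ` B) = (\<integral>\<^sup>+ x\<in>B. g x \<partial>M)"
    using o(11) by blast
  define B' where "B' = {x \<in> space M. x \<in> R \<and> F x = 0}"
  have B': "B' \<in> sets M" unfolding B'_def using o(3,7) by measurable
  define C where "C = \<tau> -` B' \<inter> D"
  have C: "C \<in> sets M" unfolding C_def by (rule op_preimg[OF op B'])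
  have "emeasure M C = (\<integral>\<^sup>+ x\<in>B'. ennreal ((cmod (F x))\<^sup>2) \<partial>M)" unfolding C_def using o(8) B' by auto
  also have "\<dots> = (\<integral>\<^sup>+ x. 0 \<partial>M)" by (intro nn_integral_cong) (auto simp: B'_def indicator_def)
  finally have Cn: "C \<in> null_sets M" using C by auto
  have "\<tau> ` C = B'"
  proof
    show "\<tau> ` C \<subseteq> B'" unfolding C_def by auto
    show "B' \<subseteq> \<tau> ` C"
    proof
      fix y assume y: "y \<in> B'"
      then have "y \<in> \<tau> ` D" using o(5) by (auto simp: B'_def)
      then obtain x where "x \<in> D" "y = \<tau> x" by auto
      then show "y \<in> \<tau> ` C" using y unfolding C_def by auto
    qed
  qed
  moreover have "emeasure M (\<tau> ` C) = (\<integral>\<^sup>+ x\<in>C. g x \<partial>M)" using g(2) C unfolding C_def by auto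
  moreover have "(\<integral>\<^sup>+ x\<in>C. g x \<partial>M) = 0" using Cn by (rule nn_integral_null_set)
  ultimately have "B' \<in> null_sets M" using B' by auto
  then have "AE x in M. x \<notin> B'" by (rule AE_not_in)
  moreover have "AE x in M. x \<in> space M" by simp
  ultimately show ?thesis by eventually_elim (auto simp: B'_def)
qed

lemma opV6: assumes op: "opset M E D R \<tau> \<sigma> F" and x: "x \<in> R"
  shows "\<sigma> x \<in> D" "\<tau> (\<sigma> x) = x"
proof -
  note o = opsetD[OF op]
  obtain y where y: "y \<in> D" "x = \<tau> y" using x o(5) by auto
  then show "\<sigma> x \<in> D" "\<tau> (\<sigma> x) = x" using o(6)[OF y(1)] by auto
qed


lemma cind: "complex_of_real (indicator D y) = (indicator D y :: complex)"
  by (simp add: indicator_def)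

lemma ind_ennreal: "(indicator E :: 'a \<Rightarrow> ennreal) = (\<lambda>x. ennreal (indicator E x))"
  by (auto simp: fun_eq_iff indicator_def)

lemma N_sets[simp]: "sets (density M (indicator E)) = sets M"
  by simp

lemma N_space[simp]: "space (density M (indicator E)) = space M"
  by simp

lemma N_meas: "f \<in> borel_measurable (density M (indicator E)) \<longleftrightarrow> f \<in> borel_measurable M"
proof -
  have "borel_measurable (density M (indicator E)) = borel_measurable M"
    by (rule measurable_cong_sets) simp_all
  then show ?thesis by simp
qed

lemma N_AE_iff: assumes "E \<in> sets M" shows "(AE x in density M (indicator E). P x) \<longleftrightarrow> (AE x in M. x \<in> E \<longrightarrow> P x)"
proof -
  have m: "(indicator E :: 'a \<Rightarrow> ennreal) \<in> borel_measurable M" using assms by simp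
  have "(AE x in density M (indicator E). P x) \<longleftrightarrow> (AE x in M. 0 < (indicator E x :: ennreal) \<longrightarrow> P x)"
    by (rule AE_density[OF m])
  also have "\<dots> \<longleftrightarrow> (AE x in M. x \<in> E \<longrightarrow> P x)"
    by (intro arg_cong[where f="almost_everywhere M"] ext) (simp add: indicator_def)
  finally show ?thesis .
qed

lemma N_AE: assumes "E \<in> sets M" "AE x in M. P x" shows "AE x in density M (indicator E). P x"
  using assms(2) unfolding N_AE_iff[OF assms(1)] by (rule eventually_mono) simp

lemma N_nn: assumes E: "E \<in> sets M" and \<phi>: "\<phi> \<in> borel_measurable M"
  shows "(\<integral>\<^sup>+ x. ennreal (\<phi> x) \<partial>density M (indicator E)) = (\<integral>\<^sup>+ x. ennreal (indicator E x * \<phi> x) \<partial>M)"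
  using E \<phi> by (subst nn_integral_density) (auto intro!: nn_integral_cong simp: indicator_def)

lemma N_int: fixes \<phi> :: "'a \<Rightarrow> complex" assumes E: "E \<in> sets M" and \<phi>: "\<phi> \<in> borel_measurable M"
  shows "(LINT x|density M (indicator E). \<phi> x) = (LINT x|M. indicator E x *\<^sub>R \<phi> x)"
  unfolding ind_ennreal using E \<phi> by (subst integral_density) auto

lemma N_L2_iff: assumes E: "E \<in> sets M"
  shows "g \<in> L2 (density M (indicator E)) \<longleftrightarrow>
    g \<in> borel_measurable M \<and> (\<integral>\<^sup>+ x. ennreal (indicator E x * (cmod (g x))\<^sup>2) \<partial>M) < \<infinity>"
proof -
  have "g \<in> L2 (density M (indicator E)) \<longleftrightarrow> g \<in> borel_measurable M \<and>
     (\<lambda>x. (cmod (g x))\<^sup>2) \<in> borel_measurable M \<and> (\<integral>\<^sup>+ x. ennreal ((cmod (g x))\<^sup>2) \<partial>density M (indicator E)) < \<infinity>"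
    unfolding L2_def by (simp add: integrable_iff_bounded N_meas)
  also have "\<dots> \<longleftrightarrow> g \<in> borel_measurable M \<and> (\<integral>\<^sup>+ x. ennreal (indicator E x * (cmod (g x))\<^sup>2) \<partial>M) < \<infinity>"
  proof (cases "g \<in> borel_measurable M")
    case True
    then have "(\<lambda>x. (cmod (g x))\<^sup>2) \<in> borel_measurable M" by measurable
    then show ?thesis using N_nn[OF E] by auto
  qed simp
  finally show ?thesis .
qed

lemma opV7: assumes op: "opset M E D R \<tau> \<sigma> F" and g: "g \<in> L2 (density M (indicator E))"
  shows "(\<lambda>x. F x * g (\<sigma> x)) \<in> L2 (density M (indicator E))"
proof -
  note o = opsetD[OF op]
  have gm: "g \<in> borel_measurable M" and gi: "(\<integral>\<^sup>+ x. ennreal (indicator E x * (cmod (g x))\<^sup>2) \<partial>M) < \<infinity>"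
    using g N_L2_iff[OF o(9)] by auto
  have gs: "(\<lambda>x. g (\<sigma> x)) \<in> borel_measurable M" using measurable_compose[OF o(1) gm] .
  define \<Phi> where "\<Phi> x = ennreal (indicator E x * (cmod (g (\<sigma> x)))\<^sup>2)" for x
  have \<Phi>: "\<Phi> \<in> borel_measurable M" unfolding \<Phi>_def using gs o(9) by measurable
  have "(\<integral>\<^sup>+ x. ennreal (indicator E x * (cmod (F x * g (\<sigma> x)))\<^sup>2) \<partial>M) = (\<integral>\<^sup>+ x. ennreal ((cmod (F x))\<^sup>2) * \<Phi> x \<partial>M)"
    unfolding \<Phi>_def by (intro nn_integral_cong) (simp add: ennreal_mult'[symmetric] norm_mult power_mult_distrib algebra_simps)
  also have "\<dots> = (\<integral>\<^sup>+ x. \<Phi> (\<tau> x) * indicator D x \<partial>M)" by (rule cov_nn[OF o(2,4,7,8) \<Phi>])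
  also have "\<dots> = (\<integral>\<^sup>+ x. ennreal (indicator E x * (cmod (g x))\<^sup>2) * indicator D x \<partial>M)"
    using opV3[OF op]
  proof (intro nn_integral_cong_AE, eventually_elim)
    case (elim x)
    then show ?case unfolding \<Phi>_def using o(6) by (cases "x \<in> D") (auto simp: indicator_def)
  qed
  also have "\<dots> \<le> (\<integral>\<^sup>+ x. ennreal (indicator E x * (cmod (g x))\<^sup>2) \<partial>M)"
    by (intro nn_integral_mono) (auto simp: indicator_def)
  finally have "(\<integral>\<^sup>+ x. ennreal (indicator E x * (cmod (F x * g (\<sigma> x)))\<^sup>2) \<partial>M) < \<infinity>" using gi by auto
  then show ?thesis using N_L2_iff[OF o(9)] o(7) gs by auto
qed

lemma opV8: assumes op: "opset M E D R \<tau> \<sigma> F" and u: "u \<in> L2 (density M (indicator E))"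
  shows "(\<lambda>y. indicator D y * (u (\<tau> y) / F (\<tau> y))) \<in> L2 (density M (indicator E))"
proof -
  note o = opsetD[OF op]
  have um: "u \<in> borel_measurable M" and ui: "(\<integral>\<^sup>+ x. ennreal (indicator E x * (cmod (u x))\<^sup>2) \<partial>M) < \<infinity>"
    using u N_L2_iff[OF o(9)] by auto
  have m0: "(\<lambda>y. indicator D y *\<^sub>R (u (\<tau> y) / F (\<tau> y))) \<in> borel_measurable M"
  proof -
    have "(\<lambda>z. u z / F z) \<in> borel_measurable M" using um o(7) by measurable
    from restr_meas[OF o(2,4) this] show ?thesis by simp
  qed
  have m: "(\<lambda>y. indicator D y * (u (\<tau> y) / F (\<tau> y))) \<in> borel_measurable M"
    using m0 by (simp add: scaleR_conv_of_real cind)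
  define \<Psi> where "\<Psi> z = ennreal (indicator E z * ((cmod (u z))\<^sup>2 / (cmod (F z))\<^sup>2))" for z
  have \<Psi>: "\<Psi> \<in> borel_measurable M" unfolding \<Psi>_def using um o(7,9) by measurable
  have "(\<integral>\<^sup>+ x. ennreal (indicator E x * (cmod (indicator D x * (u (\<tau> x) / F (\<tau> x))))\<^sup>2) \<partial>M)
      = (\<integral>\<^sup>+ x. \<Psi> (\<tau> x) * indicator D x \<partial>M)"
    using opV3[OF op]
  proof (intro nn_integral_cong_AE, eventually_elim)
    case (elim x)
    then show ?case unfolding \<Psi>_def
      by (cases "x \<in> D") (auto simp: indicator_def norm_divide power_divide)
  qed
  also have "\<dots> = (\<integral>\<^sup>+ x. ennreal ((cmod (F x))\<^sup>2) * \<Psi> x \<partial>M)" by (rule cov_nn[OF o(2,4,7,8) \<Psi>, symmetric])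
  also have "\<dots> \<le> (\<integral>\<^sup>+ x. ennreal (indicator E x * (cmod (u x))\<^sup>2) \<partial>M)"
  proof (intro nn_integral_mono)
    fix x
    have "(cmod (F x))\<^sup>2 * (indicator E x * ((cmod (u x))\<^sup>2 / (cmod (F x))\<^sup>2)) \<le> indicator E x * (cmod (u x))\<^sup>2"
      by (cases "F x = 0") (auto simp: indicator_def)
    then show "ennreal ((cmod (F x))\<^sup>2) * \<Psi> x \<le> ennreal (indicator E x * (cmod (u x))\<^sup>2)"
      unfolding \<Psi>_def by (simp add: ennreal_mult'[symmetric])
  qed
  finally have "(\<integral>\<^sup>+ x. ennreal (indicator E x * (cmod (indicator D x * (u (\<tau> x) / F (\<tau> x))))\<^sup>2) \<partial>M) < \<infinity>"
    using ui by auto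
  then show ?thesis using N_L2_iff[OF o(9)] m by auto
qed


lemma cnorm_div: "(z::complex) \<noteq> 0 \<Longrightarrow> complex_of_real ((cmod z)\<^sup>2) * cnj (v / z) = z * cnj v"
proof -
  assume z: "z \<noteq> 0"
  then have "cnj z \<noteq> 0" by simp
  have "complex_of_real ((cmod z)\<^sup>2) * cnj (v / z) = z * cnj z * (cnj v / cnj z)"
    by (simp only: complex_norm_square complex_cnj_divide)
  also have "\<dots> = z * cnj v" using \<open>cnj z \<noteq> 0\<close> by simp
  finally show ?thesis .
qed

lemma opV9: assumes op: "opset M E D R \<tau> \<sigma> F"
  shows "is_adjoint (density M (indicator E)) (\<lambda>g x. F x * g (\<sigma> x)) (\<lambda>u y. indicator D y * (u (\<tau> y) / F (\<tau> y)))"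
  unfolding is_adjoint_def
proof (intro conjI ballI)
  note o = opsetD[OF op]
  fix u assume u: "u \<in> L2 (density M (indicator E))"
  show "(\<lambda>y. indicator D y * (u (\<tau> y) / F (\<tau> y))) \<in> L2 (density M (indicator E))" by (rule opV8[OF op u])
next
  note o = opsetD[OF op]
  fix g u assume g: "g \<in> L2 (density M (indicator E))" and u: "u \<in> L2 (density M (indicator E))"
  have gm: "g \<in> borel_measurable M" using g N_L2_iff[OF o(9)] by auto
  have um: "u \<in> borel_measurable M" using u N_L2_iff[OF o(9)] by auto
  have Bm: "(\<lambda>y. indicator D y * (u (\<tau> y) / F (\<tau> y))) \<in> borel_measurable M"
    using opV8[OF op u] N_L2_iff[OF o(9)] by auto
  have gs: "(\<lambda>x. g (\<sigma> x)) \<in> borel_measurable M" using measurable_compose[OF o(1) gm] .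
  define \<Psi> where "\<Psi> x = indicator E x *\<^sub>R (g (\<sigma> x) * cnj (u x / F x))" for x
  have \<Psi>: "\<Psi> \<in> borel_measurable M" unfolding \<Psi>_def using gs um o(7,9) by measurable
  have "l2_inner (density M (indicator E)) (\<lambda>x. F x * g (\<sigma> x)) u
      = (LINT x|M. indicator E x *\<^sub>R (F x * g (\<sigma> x) * cnj (u x)))"
    unfolding l2_inner_def using gs um o(7,9) by (subst N_int) auto
  also have "\<dots> = (LINT x|M. (cmod (F x))\<^sup>2 *\<^sub>R \<Psi> x)"
  proof (rule Bochner_Integration.integral_cong[OF refl])
    fix x
    show "indicator E x *\<^sub>R (F x * g (\<sigma> x) * cnj (u x)) = (cmod (F x))\<^sup>2 *\<^sub>R \<Psi> x"
    proof (cases "F x = 0")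
      case True then show ?thesis by (simp add: \<Psi>_def)
    next
      case False
      have "(cmod (F x))\<^sup>2 *\<^sub>R \<Psi> x = indicator E x *\<^sub>R (g (\<sigma> x) * (complex_of_real ((cmod (F x))\<^sup>2) * cnj (u x / F x)))"
        by (simp add: \<Psi>_def scaleR_conv_of_real algebra_simps)
      also have "\<dots> = indicator E x *\<^sub>R (F x * g (\<sigma> x) * cnj (u x))"
        by (simp only: cnorm_div[OF False]) (simp add: algebra_simps)
      finally show ?thesis by simp
    qed
  qed
  also have "\<dots> = (LINT x|M. indicator D x *\<^sub>R \<Psi> (\<tau> x))" by (rule cov_int[OF o(2,4,7,8) \<Psi>])
  also have "\<dots> = (LINT x|M. indicator E x *\<^sub>R (g x * cnj (indicator D x * (u (\<tau> x) / F (\<tau> x)))))"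
  proof (rule integral_cong_AE)
    show "(\<lambda>x. indicator D x *\<^sub>R \<Psi> (\<tau> x)) \<in> borel_measurable M" by (rule restr_meas[OF o(2,4) \<Psi>])
    show "(\<lambda>x. indicator E x *\<^sub>R (g x * cnj (indicator D x * (u (\<tau> x) / F (\<tau> x))))) \<in> borel_measurable M"
    proof -
      have gen: "(\<lambda>x. indicator E x *\<^sub>R (g x * cnj (b x))) \<in> borel_measurable M" if "b \<in> borel_measurable M" for b
        using gm that o(9) by measurable
      show ?thesis by (rule gen[OF Bm])
    qed
    show "AE x in M. indicator D x *\<^sub>R \<Psi> (\<tau> x) = indicator E x *\<^sub>R (g x * cnj (indicator D x * (u (\<tau> x) / F (\<tau> x))))"
      using opV3[OF op]
    proof eventually_elim
      case (elim x)
      show ?case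
      proof (cases "x \<in> D")
        case True
        then show ?thesis using elim o(6)[OF True] by (simp add: \<Psi>_def indicator_def)
      next
        case False
        then show ?thesis by (simp add: indicator_def)
      qed
    qed
  qed
  also have "\<dots> = l2_inner (density M (indicator E)) g (\<lambda>y. indicator D y * (u (\<tau> y) / F (\<tau> y)))"
  proof -
    have gen: "(\<lambda>x. g x * cnj (b x)) \<in> borel_measurable M" if "b \<in> borel_measurable M" for b
      using gm that by measurable
    show ?thesis unfolding l2_inner_def by (rule N_int[OF o(9) gen[OF Bm], symmetric])
  qed
  finally show "l2_inner (density M (indicator E)) (\<lambda>x. F x * g (\<sigma> x)) u =
    l2_inner (density M (indicator E)) g (\<lambda>y. indicator D y * (u (\<tau> y) / F (\<tau> y)))" .
qed

lemma opV10: assumes op: "opset M E D R \<tau> \<sigma> F"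
  shows "AE x in density M (indicator E). F x * (indicator D (\<sigma> x) * (u (\<tau> (\<sigma> x)) / F (\<tau> (\<sigma> x)))) = indicator R x * u x"
proof -
  note o = opsetD[OF op]
  have "AE x in M. F x * (indicator D (\<sigma> x) * (u (\<tau> (\<sigma> x)) / F (\<tau> (\<sigma> x)))) = indicator R x * u x"
    using opV4[OF op] opV5[OF op]
  proof eventually_elim
    case (elim x)
    show ?case
    proof (cases "x \<in> R")
      case True
      then show ?thesis using elim opV6[OF op True] by (simp add: indicator_def)
    next
      case False
      then show ?thesis using elim by (simp add: indicator_def)
    qed
  qed
  then show ?thesis by (rule N_AE[OF o(9)])
qed

lemma op_Qc:
  assumes op: "opset M E D R \<tau> \<sigma> F" and A: "bounded_op (density M (indicator E)) A"
    and cT: "commutes (density M (indicator E)) A (\<lambda>g x. F x * g (\<sigma> x))"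
    and cB: "commutes (density M (indicator E)) A (\<lambda>u y. indicator D y * (u (\<tau> y) / F (\<tau> y)))"
  shows "Qc (density M (indicator E)) A R"
  unfolding Qc_def
proof
  note o = opsetD[OF op]
  let ?N = "density M (indicator E)"
  let ?T = "\<lambda>g x. F x * g (\<sigma> x)"
  let ?B = "\<lambda>u y. indicator D y * (u (\<tau> y) / F (\<tau> y))"
  fix g assume g: "g \<in> L2 ?N"
  have Bg: "?B g \<in> L2 ?N" by (rule opV8[OF op g])
  have TBg: "?T (?B g) \<in> L2 ?N" by (rule opV7[OF op Bg])
  have ABg: "A (?B g) \<in> L2 ?N" by (rule bop_L2[OF A Bg])
  have Ag: "A g \<in> L2 ?N" by (rule bop_L2[OF A g])
  have BAg: "?B (A g) \<in> L2 ?N" by (rule opV8[OF op Ag])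
  have Rm: "R \<in> sets ?N" using o(3) by simp
  have a1: "AE x in ?N. A (\<lambda>y. indicator R y * g y) x = A (?T (?B g)) x"
  proof (rule bop_ae[OF A L2_ind[OF Rm g] TBg])
    show "AE x in ?N. indicator R x * g x = ?T (?B g) x" using opV10[OF op, of g] by (auto elim: eventually_mono)
  qed
  have a2: "AE x in ?N. A (?T (?B g)) x = ?T (A (?B g)) x" using cT Bg unfolding commutes_def by auto
  have a3: "AE x in ?N. ?T (A (?B g)) x = ?T (?B (A g)) x"
  proof (rule adjoint_resp_ae[OF opV9[OF op] _ ABg BAg])
    show "\<forall>g\<in>L2 ?N. ?T g \<in> L2 ?N" using opV7[OF op] by auto
    show "AE x in ?N. A (?B g) x = ?B (A g) x" using cB g unfolding commutes_def by auto
  qed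
  have a4: "AE x in ?N. ?T (?B (A g)) x = indicator R x * A g x" using opV10[OF op, of "A g"] by simp
  from a1 a2 a3 a4 show "AE x in ?N. A (\<lambda>y. indicator R y * g y) x = indicator R x * A g x"
    by eventually_elim simp
qed

lemma op_inv:
  assumes op: "opset M E D R \<tau> \<sigma> F" and A: "bounded_op (density M (indicator E)) A"
    and cT: "commutes (density M (indicator E)) A (\<lambda>g x. F x * g (\<sigma> x))"
    and w: "w \<in> L2 (density M (indicator E))" and wnz: "\<And>x. x \<in> space M \<Longrightarrow> w x \<noteq> 0"
    and hm: "h \<in> borel_measurable M" and hb: "AE x in density M (indicator E). cmod (h x) \<le> K"
    and rep: "\<forall>g\<in>L2 (density M (indicator E)). AE x in density M (indicator E). A g x = h x * g x"
  shows "AE x in density M (indicator E). x \<in> R \<longrightarrow> h (\<sigma> x) = h x"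
proof -
  note o = opsetD[OF op]
  let ?N = "density M (indicator E)"
  let ?T = "\<lambda>g x. F x * g (\<sigma> x)"
  have Tw: "?T w \<in> L2 ?N" by (rule opV7[OF op w])
  have Aw: "A w \<in> L2 ?N" by (rule bop_L2[OF A w])
  have hmN: "h \<in> borel_measurable ?N" using hm by (simp add: N_meas)
  have hw: "(\<lambda>x. h x * w x) \<in> L2 ?N" by (rule L2_mult_bdd[OF w hmN hb])
  have b1: "AE x in ?N. A (?T w) x = ?T (A w) x" using cT w unfolding commutes_def by auto
  have b2: "AE x in ?N. A (?T w) x = h x * ?T w x" using rep Tw by auto
  have b3: "AE x in ?N. ?T (A w) x = ?T (\<lambda>x. h x * w x) x"
  proof (rule adjoint_resp_ae[OF opV9[OF op] _ Aw hw])
    show "\<forall>g\<in>L2 ?N. ?T g \<in> L2 ?N" using opV7[OF op] by auto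
    show "AE x in ?N. A w x = h x * w x" using rep w by auto
  qed
  have b4: "AE x in ?N. x \<in> R \<longrightarrow> F x \<noteq> 0" by (rule N_AE[OF o(9) opV5[OF op]])
  have b5: "AE x in ?N. x \<in> space M" by (rule AE_I2) simp
  from b1 b2 b3 b4 b5 show ?thesis
  proof eventually_elim
    case (elim x)
    show ?case
    proof
      assume xR: "x \<in> R"
      have "\<sigma> x \<in> space M" using measurable_space[OF o(1) elim(5)] .
      then have wn: "w (\<sigma> x) \<noteq> 0" by (rule wnz)
      have "h x * (F x * w (\<sigma> x)) = F x * (h (\<sigma> x) * w (\<sigma> x))" using elim(1-3) by simp
      then show "h (\<sigma> x) = h x" using elim(4) xR wn by (simp add: algebra_simps)
    qed
  qed
qed

lemma exists_pos_L2:
  assumes "sigma_finite_measure N"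
  shows "\<exists>w. w \<in> L2 N \<and> (\<forall>x\<in>space N. w x \<noteq> 0)"
proof -
  obtain hh where hh: "hh \<in> borel_measurable N" "integral\<^sup>N N hh \<noteq> \<infinity>" "\<forall>x\<in>space N. 0 < hh x \<and> hh x < \<infinity>"
    using sigma_finite_measure.Ex_finite_integrable_function[OF assms] by blast
  define w where "w x = complex_of_real (sqrt (enn2real (hh x)))" for x
  have wm: "w \<in> borel_measurable N" unfolding w_def using hh(1) by measurable
  have sq: "(cmod (w x))\<^sup>2 = enn2real (hh x)" for x
    unfolding w_def by (simp add: norm_of_real)
  have "integrable N (\<lambda>x. enn2real (hh x))"
  proof (rule integrableI_bounded)
    show "(\<lambda>x. enn2real (hh x)) \<in> borel_measurable N" using hh(1) by measurable
    have "(\<integral>\<^sup>+ x. ennreal (norm (enn2real (hh x))) \<partial>N) = integral\<^sup>N N hh"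
      using hh(3) by (intro nn_integral_cong) (simp add: ennreal_enn2real less_top)
    then show "(\<integral>\<^sup>+ x. ennreal (norm (enn2real (hh x))) \<partial>N) < \<infinity>" using hh(2) by (simp add: less_top)
  qed
  then have "w \<in> L2 N" unfolding L2_def using wm sq by simp
  moreover have "\<forall>x\<in>space N. w x \<noteq> 0"
  proof
    fix x assume x: "x \<in> space N"
    have "0 < enn2real (hh x)" using hh(3) x enn2real_positive_iff[of "hh x"] by auto
    then show "w x \<noteq> 0" by (simp add: w_def)
  qed
  ultimately show ?thesis by blast
qed

lemma sigma_finite_N:
  assumes A: "countable \<A>" "\<A> \<subseteq> sets M" "\<Union>\<A> = space M" "\<forall>a\<in>\<A>. emeasure M a \<noteq> \<infinity>"
    and E: "E \<in> sets M"
  shows "sigma_finite_measure (density M (indicator E))"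
  unfolding sigma_finite_measure_def
proof (intro exI[of _ \<A>] conjI)
  show "countable \<A>" "\<A> \<subseteq> sets (density M (indicator E))" "\<Union>\<A> = space (density M (indicator E))"
    using A by auto
  show "\<forall>a\<in>\<A>. emeasure (density M (indicator E)) a \<noteq> \<infinity>"
  proof
    fix a assume a: "a \<in> \<A>"
    have aM: "a \<in> sets M" using a A(2) by auto
    have "emeasure (density M (indicator E)) a = (\<integral>\<^sup>+ x. indicator E x * indicator a x \<partial>M)"
      using E aM by (subst emeasure_density) auto
    also have "\<dots> \<le> (\<integral>\<^sup>+ x. indicator a x \<partial>M)"
      by (intro nn_integral_mono) (auto simp: indicator_def)
    also have "\<dots> = emeasure M a" using aM by simp
    finally show "emeasure (density M (indicator E)) a \<noteq> \<infinity>" using A(4) a by (auto simp: top_unique)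
  qed
qed

lemma kg_deg: "kgraph k G \<Longrightarrow> l \<in> paths G \<Longrightarrow> deg G l \<in> Nk k"
  unfolding kgraph_def by blast

lemma kg_countable: "kgraph k G \<Longrightarrow> countable (paths G)"
  unfolding kgraph_def by blast

lemma zero_Nk: "(0::nat \<Rightarrow> nat) \<in> Nk k" by (simp add: Nk_def)

lemma ip_cyl: assumes kg: "kgraph k G" and x: "x \<in> inf_paths k G"
  shows "x 0 0 \<in> paths G" "x \<in> cyl k G (x 0 0)"
proof -
  have "\<forall>m\<in>Nk k. x m m \<in> idp G ` verts G" using x unfolding inf_paths_def mem_Collect_eq by (elim conjE)
  then have "x 0 0 \<in> idp G ` verts G" using zero_Nk[of k] by blast
  then obtain v where v: "v \<in> verts G" "x 0 0 = idp G v" by auto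
  have "\<forall>v\<in>verts G. idp G v \<in> paths G \<and> rng G (idp G v) = v \<and> src G (idp G v) = v
                   \<and> deg G (idp G v) = 0" using kg unfolding kgraph_def by (elim conjE)
  then have "idp G v \<in> paths G" "deg G (idp G v) = 0" using v(1) by auto
  then show "x 0 0 \<in> paths G" "x \<in> cyl k G (x 0 0)" using v x by (auto simp: cyl_def)
qed

lemma cyl_sub: "cyl k G l \<subseteq> inf_paths k G" by (auto simp: cyl_def)

lemma opset_of_proj:
  assumes kg: "kgraph k G"
    and proj: "Lambda_projective_system k G M (\<lambda>l. cyl k G (idp G (src G l))) (cyl k G)
                 (prefix k G) (shift k) f"
    and E_meas: "E \<in> sets M"
    and E_inv: "\<forall>n\<in>Nk k. emeasure M (symdiff E (shift k n -` E \<inter> space M)) = 0"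
    and l: "l \<in> paths G"
  shows "opset M E (cyl k G (idp G (src G l))) (cyl k G l) (prefix k G l) (shift k (deg G l)) (f l)"
proof -
  have n: "deg G l \<in> Nk k" by (rule kg_deg[OF kg l])
  note P1 = proj[unfolded Lambda_projective_system_def, THEN conjunct1, unfolded Lambda_SBFS_def, THEN conjunct1]
  have S: "SBFS_deg k G M (\<lambda>l. cyl k G (idp G (src G l))) (cyl k G) (prefix k G) (shift k) (deg G l)"
    using P1 n by (rule bspec)
  note P2 = proj[unfolded Lambda_projective_system_def, THEN conjunct2, THEN conjunct1, rule_format, OF l]
  have f: "f l \<in> L2 M" "\<forall>B\<in>sets M. emeasure M (prefix k G l -` B \<inter> cyl k G (idp G (src G l))) =
                     (\<integral>\<^sup>+ x\<in>B. ennreal ((cmod (f l x))\<^sup>2) \<partial>M)"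
    using P2 by simp_all
  note S1 = S[unfolded SBFS_deg_def, THEN conjunct1]
  note S2 = S[unfolded SBFS_deg_def, THEN conjunct2, THEN conjunct1, rule_format, OF l refl]
  have fm: "f l \<in> borel_measurable M" using f(1) unfolding L2_def by blast
  show ?thesis unfolding opset_def
    using S1 S2 f(2) fm E_meas E_inv[rule_format, OF n] by (intro conjI) blast+
qed

lemma Trep: "proj_rep_op G (shift k) f l = (\<lambda>g x. f l x * g (shift k (deg G l) x))"
  by (simp add: proj_rep_op_def fun_eq_iff)


lemma irr_from_dich:
  fixes h :: "'a \<Rightarrow> complex"
  assumes rep: "\<forall>g\<in>L2 N. AE x in N. A g x = h x * g x" and hb: "AE x in N. cmod (h x) \<le> K"
    and hm: "h \<in> borel_measurable N"
    and erg: "\<And>P. {x \<in> space N. P (h x)} \<in> sets N \<Longrightarrow>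
       emeasure N {x \<in> space N. P (h x)} = 0 \<or> emeasure N (space N - {x \<in> space N. P (h x)}) = 0"
  shows "\<exists>c. \<forall>g\<in>L2 N. AE x in N. A g x = c * g x"
proof -
  have dRe: "(AE x in N. Re (h x) \<le> r) \<or> (AE x in N. r < Re (h x))" for r
  proof (rule dich_from_measure)
    show "(\<lambda>x. Re (h x)) \<in> borel_measurable N" using hm by measurable
    have "{x \<in> space N. r < Re (h x)} \<in> sets N" using hm by measurable
    then show "emeasure N {x \<in> space N. r < Re (h x)} = 0 \<or> emeasure N (space N - {x \<in> space N. r < Re (h x)}) = 0"
      using erg[of "\<lambda>z. r < Re z"] by simp
  qed
  have dIm: "(AE x in N. Im (h x) \<le> r) \<or> (AE x in N. r < Im (h x))" for r
  proof (rule dich_from_measure)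
    show "(\<lambda>x. Im (h x)) \<in> borel_measurable N" using hm by measurable
    have "{x \<in> space N. r < Im (h x)} \<in> sets N" using hm by measurable
    then show "emeasure N {x \<in> space N. r < Im (h x)} = 0 \<or> emeasure N (space N - {x \<in> space N. r < Im (h x)}) = 0"
      using erg[of "\<lambda>z. r < Im z"] by simp
  qed
  obtain c where c: "AE x in N. h x = c" using const_complex_01[OF hb dRe dIm] by blast
  have "\<forall>g\<in>L2 N. AE x in N. A g x = c * g x"
  proof
    fix g assume "g \<in> L2 N"
    with rep have "AE x in N. A g x = h x * g x" by auto
    with c show "AE x in N. A g x = c * g x" by eventually_elim simp
  qed
  then show ?thesis by blast
qed

theorem theorem4p15:
  fixes k :: nat and G :: "('v, 'p) kgraph" and M :: "'p ipath measure"
    and f :: "'p \<Rightarrow> 'p ipath \<Rightarrow> complex" and E :: "'p ipath set"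
  assumes kg: "kgraph k G"
    and rf: "row_finite_no_sources k G"
    and space_M: "space M = inf_paths k G"
    and sets_M: "sets M = sigma_sets (inf_paths k G) (cyl k G ` paths G)"
    and cyl_fin: "\<forall>l\<in>paths G. emeasure M (cyl k G l) < \<infinity>"
    and proj: "Lambda_projective_system k G M (\<lambda>l. cyl k G (idp G (src G l))) (cyl k G)
                 (prefix k G) (shift k) f"
    and E_meas: "E \<in> sets M"
    and E_inv: "\<forall>n\<in>Nk k. emeasure M (symdiff E (shift k n -` E \<inter> space M)) = 0"
    and E_pos: "\<forall>v\<in>verts G. emeasure M (E \<inter> cyl k G (idp G v)) > 0"
  shows
    "(\<forall>A\<in>commutant (restr_measure M E) (proj_rep_op G (shift k) f ` paths G).
        \<exists>h. h \<in> borel_measurable (restr_measure M E) \<and>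
            (\<exists>C. AE x in restr_measure M E. cmod (h x) \<le> C) \<and>
            (\<forall>n\<in>Nk k. AE x in restr_measure M E. h (shift k n x) = h x) \<and>
            (\<forall>g\<in>L2 (restr_measure M E). AE x in restr_measure M E. A g x = h x * g x))
     \<and> ((\<exists>n\<in>Nk k. ergodic_wrt (restr_measure M E) (shift k n)) \<longrightarrow>
          irreducible_ops (restr_measure M E) (proj_rep_op G (shift k) f ` paths G))
     \<and> (jointly_ergodic_wrt (restr_measure M E) (shift k ` Nk k) \<longrightarrow>
          irreducible_ops (restr_measure M E) (proj_rep_op G (shift k) f ` paths G))"
proof -
  define N where "N = density M (indicator E)"
  have NR: "restr_measure M E = N" unfolding N_def restr_measure_def ..
  let ?Ts = "proj_rep_op G (shift k) f ` paths G"
  have op: "opset M E (cyl k G (idp G (src G l))) (cyl k G l) (prefix k G l) (shift k (deg G l)) (f l)"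
    if "l \<in> paths G" for l
    by (rule opset_of_proj[OF kg proj E_meas E_inv that])
  note P1 = proj[unfolded Lambda_projective_system_def, THEN conjunct1, unfolded Lambda_SBFS_def, THEN conjunct1]
  have SB: "SBFS_deg k G M (\<lambda>l. cyl k G (idp G (src G l))) (cyl k G) (prefix k G) (shift k) n" if "n \<in> Nk k" for n
    using P1 that by (rule bspec)
  have shM: "shift k n \<in> M \<rightarrow>\<^sub>M M" if "n \<in> Nk k" for n
    using SB[OF that] unfolding SBFS_deg_def by (rule conjunct1)
  have shN: "shift k n \<in> N \<rightarrow>\<^sub>M N" if "n \<in> Nk k" for n
  proof -
    have "N \<rightarrow>\<^sub>M N = M \<rightarrow>\<^sub>M M" unfolding N_def by (rule measurable_cong_sets) simp_all
    then show ?thesis using shM[OF that] by simp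
  qed
  have cover: "emeasure M (space M - (\<Union>l\<in>{l\<in>paths G. deg G l = n}. cyl k G l)) = 0" if "n \<in> Nk k" for n
    using SB[OF that] unfolding SBFS_deg_def by (elim conjE)
  have cylM: "cyl k G l \<in> sets M" if "l \<in> paths G" for l
    using that sets_M by auto
  have spN: "space N = inf_paths k G" unfolding N_def using space_M by simp
  have sN: "sets N = sigma_sets (space N) (cyl k G ` paths G)" unfolding N_def using sets_M space_M by simp
  have cnt: "countable (paths G)" by (rule kg_countable[OF kg])
  have sf: "sigma_finite_measure N" unfolding N_def
  proof (rule sigma_finite_N[OF _ _ _ _ E_meas])
    show "countable (cyl k G ` paths G)" using cnt by simp
    show "cyl k G ` paths G \<subseteq> sets M" using cylM by auto
    show "\<Union> (cyl k G ` paths G) = space M"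
    proof
      show "\<Union> (cyl k G ` paths G) \<subseteq> space M" using cyl_sub[of k G] space_M by blast
      show "space M \<subseteq> \<Union> (cyl k G ` paths G)"
      proof
        fix x assume "x \<in> space M"
        then have x: "x \<in> inf_paths k G" using space_M by simp
        show "x \<in> \<Union> (cyl k G ` paths G)" using ip_cyl[OF kg x] by blast
      qed
    qed
    show "\<forall>a\<in>cyl k G ` paths G. emeasure M a \<noteq> \<infinity>" using cyl_fin by auto
  qed
  obtain w where w: "w \<in> L2 N" "\<forall>x\<in>space N. w x \<noteq> 0" using exists_pos_L2[OF sf] by blast
  have wnz: "w x \<noteq> 0" if "x \<in> space M" for x using w(2) that unfolding N_def by simp
  have partA: "\<exists>h. h \<in> borel_measurable N \<and> (\<exists>C. AE x in N. cmod (h x) \<le> C) \<and>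
            (\<forall>n\<in>Nk k. AE x in N. h (shift k n x) = h x) \<and>
            (\<forall>g\<in>L2 N. AE x in N. A g x = h x * g x)"
    if A: "A \<in> commutant N ?Ts" for A
  proof -
    have Ab: "bounded_op N A" using A unfolding commutant_def by blast
    have cT: "commutes N A (\<lambda>g x. f l x * g (shift k (deg G l) x))" if l: "l \<in> paths G" for l
      using A l unfolding commutant_def Trep by blast
    have cB: "commutes N A (\<lambda>u y. indicator (cyl k G (idp G (src G l))) y * (u (prefix k G l y) / f l (prefix k G l y)))"
      if l: "l \<in> paths G" for l
    proof -
      have "\<forall>T\<in>?Ts. commutes N A T \<and> (\<forall>B. is_adjoint N T B \<longrightarrow> commutes N A B)"
        using A unfolding commutant_def by blast
      then have "\<forall>B. is_adjoint N (\<lambda>g x. f l x * g (shift k (deg G l) x)) B \<longrightarrow> commutes N A B"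
        using l unfolding Trep by blast
      moreover have "is_adjoint N (\<lambda>g x. f l x * g (shift k (deg G l) x))
          (\<lambda>u y. indicator (cyl k G (idp G (src G l))) y * (u (prefix k G l y) / f l (prefix k G l y)))"
        unfolding N_def by (rule opV9[OF op[OF l]])
      ultimately show ?thesis by blast
    qed
    have Q: "Qc N A S" if S: "S \<in> sets N" for S
    proof (rule Qc_sigma[OF Ab sN _ S])
      fix S assume "S \<in> cyl k G ` paths G"
      then obtain l where l: "l \<in> paths G" "S = cyl k G l" by auto
      show "Qc N A S" unfolding l(2) N_def
        by (rule op_Qc[OF op[OF l(1)]]) (use Ab cT[OF l(1)] cB[OF l(1)] in \<open>simp_all add: N_def\<close>)
    qed
    obtain h where hm: "h \<in> borel_measurable N" and hb: "\<exists>K. AE x in N. cmod (h x) \<le> K"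
      and rep: "\<forall>g\<in>L2 N. AE x in N. A g x = h x * g x"
      using mult_rep[OF Ab Q w(1) w(2)[rule_format]] by blast
    obtain K where K: "AE x in N. cmod (h x) \<le> K" using hb by blast
    have hmM: "h \<in> borel_measurable M" using hm unfolding N_def by (simp add: N_meas)
    have inv: "AE x in N. h (shift k n x) = h x" if n: "n \<in> Nk k" for n
    proof -
      let ?P = "{l \<in> paths G. deg G l = n}"
      have "AE x in N. x \<in> cyl k G l \<longrightarrow> h (shift k n x) = h x" if l: "l \<in> ?P" for l
      proof -
        have l1: "l \<in> paths G" using l by simp
        have "AE x in N. x \<in> cyl k G l \<longrightarrow> h (shift k (deg G l) x) = h x"
          unfolding N_def
          by (rule op_inv[OF op _ _ w(1)[unfolded N_def] wnz hmM K[unfolded N_def] rep[unfolded N_def]])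
            (use l1 Ab cT[OF l1] in \<open>simp_all add: N_def\<close>)
        then show ?thesis using l by simp
      qed
      then have a1: "AE x in N. \<forall>l\<in>?P. x \<in> cyl k G l \<longrightarrow> h (shift k n x) = h x"
        using cnt by (subst AE_ball_countable) (auto intro: countable_subset)
      have Um: "(\<Union>l\<in>?P. cyl k G l) \<in> sets M"
        using cnt cylM by (intro sets.countable_UN'') (auto intro: countable_subset)
      have "space M - (\<Union>l\<in>?P. cyl k G l) \<in> null_sets M" using cover[OF n] Um by auto
      then have "AE x in M. x \<notin> space M - (\<Union>l\<in>?P. cyl k G l)" by (rule AE_not_in)
      moreover have "AE x in M. x \<in> space M" by simp
      ultimately have "AE x in M. x \<in> (\<Union>l\<in>?P. cyl k G l)" by eventually_elim blast
      then have a2: "AE x in N. x \<in> (\<Union>l\<in>?P. cyl k G l)" unfolding N_def by (rule N_AE[OF E_meas])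
      from a1 a2 show ?thesis by eventually_elim blast
    qed
    show ?thesis using hm hb inv rep by blast
  qed
  have irr: "irreducible_ops N ?Ts"
    if H: "\<And>(h :: 'p ipath \<Rightarrow> complex) P. h \<in> borel_measurable N \<Longrightarrow> (\<forall>n\<in>Nk k. AE x in N. h (shift k n x) = h x) \<Longrightarrow>
       {x \<in> space N. P (h x)} \<in> sets N \<Longrightarrow>
       emeasure N {x \<in> space N. P (h x)} = 0 \<or> emeasure N (space N - {x \<in> space N. P (h x)}) = 0"
  unfolding irreducible_ops_def
  proof
    fix A assume A: "A \<in> commutant N ?Ts"
    obtain h where hm: "h \<in> borel_measurable N" and hb: "\<exists>C. AE x in N. cmod (h x) \<le> C"
      and inv: "\<forall>n\<in>Nk k. AE x in N. h (shift k n x) = h x"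
      and rep: "\<forall>g\<in>L2 N. AE x in N. A g x = h x * g x"
      using partA[OF A] by blast
    obtain C where C: "AE x in N. cmod (h x) \<le> C" using hb by blast
    show "\<exists>c. \<forall>g\<in>L2 N. AE x in N. A g x = c * g x"
      by (rule irr_from_dich[OF rep C hm H[OF hm inv]])
  qed
  have partB: "irreducible_ops N ?Ts" if erg: "\<exists>n\<in>Nk k. ergodic_wrt N (shift k n)"
  proof (rule irr)
    fix h :: "'p ipath \<Rightarrow> complex" and P
    assume hm: "h \<in> borel_measurable N" and inv: "\<forall>n\<in>Nk k. AE x in N. h (shift k n x) = h x"
      and Pm: "{x \<in> space N. P (h x)} \<in> sets N"
    obtain n where n: "n \<in> Nk k" "ergodic_wrt N (shift k n)" using erg by blast
    have "emeasure N (symdiff {x \<in> space N. P (h x)} (shift k n -` {x \<in> space N. P (h x)} \<inter> space N)) = 0"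
      by (rule dich_of_ergodic[OF shN[OF n(1)] hm inv[rule_format, OF n(1)] Pm])
    then show "emeasure N {x \<in> space N. P (h x)} = 0 \<or> emeasure N (space N - {x \<in> space N. P (h x)}) = 0"
      using n(2) Pm unfolding ergodic_wrt_def by blast
  qed
  have partC: "irreducible_ops N ?Ts" if erg: "jointly_ergodic_wrt N (shift k ` Nk k)"
  proof (rule irr)
    fix h :: "'p ipath \<Rightarrow> complex" and P
    assume hm: "h \<in> borel_measurable N" and inv: "\<forall>n\<in>Nk k. AE x in N. h (shift k n x) = h x"
      and Pm: "{x \<in> space N. P (h x)} \<in> sets N"
    have "\<forall>T\<in>shift k ` Nk k. emeasure N (symdiff {x \<in> space N. P (h x)} (T -` {x \<in> space N. P (h x)} \<inter> space N)) = 0"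
    proof
      fix T :: "'p ipath \<Rightarrow> 'p ipath" assume "T \<in> shift k ` Nk k"
      then obtain n where n: "n \<in> Nk k" "T = shift k n" by auto
      show "emeasure N (symdiff {x \<in> space N. P (h x)} (T -` {x \<in> space N. P (h x)} \<inter> space N)) = 0"
        unfolding n(2) by (rule dich_of_ergodic[OF shN[OF n(1)] hm inv[rule_format, OF n(1)] Pm])
    qed
    then show "emeasure N {x \<in> space N. P (h x)} = 0 \<or> emeasure N (space N - {x \<in> space N. P (h x)}) = 0"
      using erg Pm unfolding jointly_ergodic_wrt_def by blast
  qed
  show ?thesis unfolding NR using partA partB partC by blast
qed

end
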